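(* Let $n\ge1$, let $A$ be a smooth $\mathbb{R}_{0,m}$-valued function of $\underline{y}$ with $\widetilde{U}^n(A)=0$, where $\widetilde{U}(A)=A+e_1Ae_1+A\partial_{\underline{y}}$ and $\widetilde U^n$ is its $n$-fold composition, and let $$B(\underline{y})=\sum_{k=1}^n c_k\,\partial_{\underline{y}}^{2k-1}A(\underline{y})$$ with arbitrary real constants $c_k$. Then $$F(X)=\exp(z)A(\underline{y})+\exp(\overline{z})B(\underline{y})$$ is right $n$-monogenic (i.e. $F\partial_X^n=0$). In particular, if the constants are taken as $c_1=-\frac12$ and $c_k=-\frac{1}{2^k}\sum_{j=1}^{\lfloor k/2\rfloor}\sum_{i=1}^{j}\binom{k+1}{2j+1}\binom{j}{i}c_{k-i}$ for $k\ge2$, then $F$ is also left $n$-monogenic (i.e. $\partial_X^nF=0$).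
   Context: Let $m\ge 2$ and let $\mathbb{R}_{0,m}$ be the real Clifford algebra generated by $e_1,\dots,e_m$ with $e_i^2=-1$ and $e_ie_j=-e_je_i$ for $i\neq j$; all products are Clifford products. Identify $(x_0,\dots,x_m)\in\mathbb{R}^{m+1}$ with $X=x_0+\sum_{j=1}^m x_je_j$, and write $z=x_0+x_1e_1$, $\overline{z}=x_0-x_1e_1$, $\underline{y}=\sum_{j=2}^m x_je_j$; $\exp(z)=e^{x_0}(\cos x_1+e_1\sin x_1)$, $\exp(\overline z)=e^{x_0}(\cos x_1-e_1\sin x_1)$. Operators: $\partial_X f=\partial_{x_0}f+\sum_{j=1}^m e_j\partial_{x_j}f$, $f\partial_X=\partial_{x_0}f+\sum_{j=1}^m(\partial_{x_j}f)e_j$, $\partial_{\underline{y}}f=\sum_{j=2}^m e_j\partial_{x_j}f$, $f\partial_{\underline{y}}=\sum_{j=2}^m(\partial_{x_j}f)e_j$; powers denote iterated application on the same side. *)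

theory Defs
  imports "HOL-Analysis.Analysis"
begin

text \<open>Elements of the Clifford algebra R_{0,m} are represented by their coefficient
  functions on blades: a blade e_A (A a finite subset of {1..m}, e_A = e_{a1}...e_{ak}
  with a1 < ... < ak) has coefficient a A.  Elements of R_{0,m} are exactly those
  coefficient functions vanishing outside Pow {1..m}.\<close>

type_synonym clif = "nat set \<Rightarrow> real"

text \<open>Sign in e_A e_B = csign A B e_(A symmetric difference B), with e_i^2 = -1.\<close>
definition csign :: "nat set \<Rightarrow> nat set \<Rightarrow> real" where
  "csign A B = (-1) ^ (card {(i, j). i \<in> A \<and> j \<in> B \<and> j < i} + card (A \<inter> B))"

definition clmul :: "nat \<Rightarrow> clif \<Rightarrow> clif \<Rightarrow> clif" where
  "clmul m a b = (\<lambda>C. \<Sum>A\<in>Pow {1..m}. \<Sum>B\<in>Pow {1..m}.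
      if (A - B) \<union> (B - A) = C then csign A B * a A * b B else 0)"

definition cladd :: "clif \<Rightarrow> clif \<Rightarrow> clif" where
  "cladd a b = (\<lambda>C. a C + b C)"

definition clzero :: clif where
  "clzero = (\<lambda>C. 0)"

definition gen :: "nat \<Rightarrow> clif" where
  "gen j = (\<lambda>C. if C = {j} then 1 else 0)"

text \<open>Points X = x_0 + sum x_j e_j are represented by coordinate functions x :: nat => real
  (only coordinates 0..m are relevant).\<close>

definition cexpz :: "(nat \<Rightarrow> real) \<Rightarrow> clif" where
  "cexpz x = (\<lambda>C. if C = {} then exp (x 0) * cos (x 1)
                 else if C = {1} then exp (x 0) * sin (x 1) else 0)"

definition cexpzbar :: "(nat \<Rightarrow> real) \<Rightarrow> clif" where
  "cexpzbar x = (\<lambda>C. if C = {} then exp (x 0) * cos (x 1)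
                 else if C = {1} then - (exp (x 0) * sin (x 1)) else 0)"

definition pd :: "nat \<Rightarrow> ((nat \<Rightarrow> real) \<Rightarrow> clif) \<Rightarrow> (nat \<Rightarrow> real) \<Rightarrow> clif" where
  "pd j f x = (\<lambda>C. deriv (\<lambda>t. f (x(j := t)) C) (x j))"

fun pds :: "nat list \<Rightarrow> ((nat \<Rightarrow> real) \<Rightarrow> clif) \<Rightarrow> (nat \<Rightarrow> real) \<Rightarrow> clif" where
  "pds [] f = f"
| "pds (j # js) f = pd j (pds js f)"

definition ldirac :: "nat \<Rightarrow> ((nat \<Rightarrow> real) \<Rightarrow> clif) \<Rightarrow> (nat \<Rightarrow> real) \<Rightarrow> clif" where
  "ldirac m f x = (\<lambda>C. pd 0 f x C + (\<Sum>j=1..m. clmul m (gen j) (pd j f x) C))"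

definition rdirac :: "nat \<Rightarrow> ((nat \<Rightarrow> real) \<Rightarrow> clif) \<Rightarrow> (nat \<Rightarrow> real) \<Rightarrow> clif" where
  "rdirac m f x = (\<lambda>C. pd 0 f x C + (\<Sum>j=1..m. clmul m (pd j f x) (gen j) C))"

definition ldy :: "nat \<Rightarrow> ((nat \<Rightarrow> real) \<Rightarrow> clif) \<Rightarrow> (nat \<Rightarrow> real) \<Rightarrow> clif" where
  "ldy m f x = (\<lambda>C. \<Sum>j=2..m. clmul m (gen j) (pd j f x) C)"

definition rdy :: "nat \<Rightarrow> ((nat \<Rightarrow> real) \<Rightarrow> clif) \<Rightarrow> (nat \<Rightarrow> real) \<Rightarrow> clif" where
  "rdy m f x = (\<lambda>C. \<Sum>j=2..m. clmul m (pd j f x) (gen j) C)"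

definition Utilde :: "nat \<Rightarrow> ((nat \<Rightarrow> real) \<Rightarrow> clif) \<Rightarrow> (nat \<Rightarrow> real) \<Rightarrow> clif" where
  "Utilde m f x = (\<lambda>C. f x C + clmul m (clmul m (gen 1) (f x)) (gen 1) C + rdy m f x C)"

definition clif_valued :: "nat \<Rightarrow> ((nat \<Rightarrow> real) \<Rightarrow> clif) \<Rightarrow> bool" where
  "clif_valued m f \<longleftrightarrow> (\<forall>x C. \<not> C \<subseteq> {1..m} \<longrightarrow> f x C = 0)"

definition depends_on_y :: "nat \<Rightarrow> ((nat \<Rightarrow> real) \<Rightarrow> clif) \<Rightarrow> bool" where
  "depends_on_y m f \<longleftrightarrow> (\<forall>x x'. (\<forall>j\<in>{2..m}. x j = x' j) \<longrightarrow> f x = f x')"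

definition smooth_y :: "nat \<Rightarrow> ((nat \<Rightarrow> real) \<Rightarrow> clif) \<Rightarrow> bool" where
  "smooth_y m f \<longleftrightarrow> (\<forall>js\<in>lists {2..m}. \<forall>C.
      continuous_on UNIV (\<lambda>x. pds js f x C) \<and>
      (\<forall>j\<in>{2..m}. \<forall>x. (\<lambda>t. pds js f (x(j := t)) C) differentiable (at (x j))))"

function cstd :: "nat \<Rightarrow> real" where
  "cstd k = (if k \<le> 1 then - 1 / 2
             else - (1 / 2 ^ k) * (\<Sum>j=1..k div 2. \<Sum>i=1..j.
                      real ((k + 1) choose (2 * j + 1)) * real (j choose i) * cstd (k - i)))"
  by auto
termination
  by (relation "Wellfounded.measure id") auto

end

theory Submission
  imports Defs "HOL-Computational_Algebra.Formal_Power_Series"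
begin


definition ex :: "nat set \<Rightarrow> nat set \<Rightarrow> nat" where
  "ex A B = (\<Sum>i\<in>A. \<Sum>j\<in>B. if j \<le> i then 1 else 0)"

lemma card_pairs_sum:
  assumes "finite A" "finite B"
  shows "card {(i, j). i \<in> A \<and> j \<in> B \<and> j < i} = (\<Sum>i\<in>A. \<Sum>j\<in>B. if j < i then 1 else 0)"
proof -
  have "{(i, j). i \<in> A \<and> j \<in> B \<and> j < i} = (SIGMA i:A. {j\<in>B. j < i})" by auto
  then have "card {(i, j). i \<in> A \<and> j \<in> B \<and> j < i} = (\<Sum>i\<in>A. card {j\<in>B. j < i})"
    using assms by (simp add: card_SigmaI)
  also have "\<dots> = (\<Sum>i\<in>A. \<Sum>j\<in>B. if j < i then 1 else 0)"
    using assms by (intro sum.cong refl) (simp add: sum.If_cases Int_def)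
  finally show ?thesis .
qed

lemma card_inter_sum:
  assumes "finite A" "finite B"
  shows "card (A \<inter> B) = (\<Sum>i\<in>A. \<Sum>j\<in>B. if j = i then 1 else 0)"
proof -
  have "(\<Sum>i\<in>A. \<Sum>j\<in>B. if j = i then 1 else (0::nat)) = (\<Sum>i\<in>A. if i \<in> B then 1 else 0)"
    using assms by (intro sum.cong) (auto simp: sum.delta)
  also have "\<dots> = card (A \<inter> B)" using assms by (simp add: sum.If_cases Int_def)
  finally show ?thesis by simp
qed

lemma csign_ex:
  assumes "finite A" "finite B"
  shows "csign A B = (-1) ^ ex A B"
proof -
  have "card {(i, j). i \<in> A \<and> j \<in> B \<and> j < i} + card (A \<inter> B) = ex A B"
    unfolding ex_def card_pairs_sum[OF assms] card_inter_sum[OF assms] sum.distrib[symmetric]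
    by (intro sum.cong refl) auto
  then show ?thesis unfolding csign_def by simp
qed

lemma sum_symdiff:
  fixes f :: "nat \<Rightarrow> nat"
  assumes "finite A" "finite B"
  shows "sum f ((A - B) \<union> (B - A)) + 2 * sum f (A \<inter> B) = sum f A + sum f B"
proof -
  have a: "sum f A = sum f (A - B) + sum f (A \<inter> B)"
    using assms(1) sum.Int_Diff[of A f B] by simp
  have b: "sum f B = sum f (B - A) + sum f (A \<inter> B)"
    using assms(2) sum.Int_Diff[of B f A] by (simp add: Int_commute)
  have c: "sum f ((A - B) \<union> (B - A)) = sum f (A - B) + sum f (B - A)"
    using assms by (intro sum.union_disjoint) auto
  show ?thesis using a b c by simp
qed

lemma neg1_pow_eq:
  assumes "a + 2 * d = b + (c::nat)"
  shows "((-1::real) ^ a) = (-1) ^ b * (-1) ^ c"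
proof -
  have d: "(-1::real) ^ (2 * d) = 1" by (simp add: power_mult)
  have "(-1::real) ^ (a + 2 * d) = (-1) ^ a" by (simp only: power_add d mult_1_right)
  then show ?thesis using assms by (simp only: power_add)
qed

lemma csign_symdiff_left:
  assumes "finite A" "finite B" "finite C"
  shows "csign ((A - B) \<union> (B - A)) C = csign A C * csign B C"
proof -
  let ?g = "\<lambda>i. \<Sum>j\<in>C. if j \<le> i then 1 else (0::nat)"
  have e: "ex ((A - B) \<union> (B - A)) C + 2 * sum ?g (A \<inter> B) = ex A C + ex B C"
    unfolding ex_def using sum_symdiff[OF assms(1,2), of ?g] by simp
  have fs: "finite ((A - B) \<union> (B - A))" using assms by simp
  show ?thesis using neg1_pow_eq[OF e]
    by (simp only: csign_ex[OF fs assms(3)] csign_ex[OF assms(1,3)] csign_ex[OF assms(2,3)])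
qed

lemma csign_symdiff_right:
  assumes "finite A" "finite B" "finite C"
  shows "csign A ((B - C) \<union> (C - B)) = csign A B * csign A C"
proof -
  have e: "ex A ((B - C) \<union> (C - B)) + 2 * ex A (B \<inter> C) = ex A B + ex A C"
    unfolding ex_def sum_distrib_left sum.distrib[symmetric]
  proof (intro sum.cong refl)
    fix x
    show "(\<Sum>j\<in>(B - C) \<union> (C - B). if j \<le> x then 1 else 0) +
      (\<Sum>j\<in>B \<inter> C. 2 * (if j \<le> x then 1 else 0)) =
      (\<Sum>j\<in>B. if j \<le> x then 1 else (0::nat)) + (\<Sum>j\<in>C. if j \<le> x then 1 else 0)"
      using sum_symdiff[OF assms(2,3), of "\<lambda>j. if j \<le> x then 1 else 0"]
      by (simp add: sum_distrib_left)
  qed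
  have fs: "finite ((B - C) \<union> (C - B))" using assms by simp
  show ?thesis using neg1_pow_eq[OF e]
    by (simp only: csign_ex[OF assms(1) fs] csign_ex[OF assms(1,2)] csign_ex[OF assms(1,3)])
qed

lemma csign_sq: "csign A B * csign A B = 1"
proof -
  have "csign A B * csign A B = ((-1) * (-1)) ^ (card {(i, j). i \<in> A \<and> j \<in> B \<and> j < i} + card (A \<inter> B))"
    unfolding csign_def by (simp only: power_mult_distrib)
  then show ?thesis by simp
qed

lemma expand_aux: "(if q then s * (\<Sum>A\<in>P. \<Sum>B\<in>Q. f A B) * w else 0) =
   (\<Sum>A\<in>P. \<Sum>B\<in>Q. if q then s * f A B * w else (0::real))"
  by (cases q) (simp_all add: sum_distrib_left sum_distrib_right)

lemma expand_aux2: "(if q then s * v * (\<Sum>A\<in>P. \<Sum>B\<in>Q. f A B) else 0) =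
   (\<Sum>A\<in>P. \<Sum>B\<in>Q. if q then s * v * f A B else (0::real))"
  by (cases q) (simp_all add: sum_distrib_left sum_distrib_right)

lemma aux_if: "(if q then s * (if r then v else 0) * w else (0::real)) = (if r then (if q then s * v * w else 0) else 0)"
  by simp

lemma aux_if2: "(if q then s * u * (if r then v else 0) else (0::real)) = (if r then (if q then s * u * v else 0) else 0)"
  by simp

lemma sd_Pow: "A \<in> Pow {1..m} \<Longrightarrow> B \<in> Pow {1..m} \<Longrightarrow> (A - B) \<union> (B - A) \<in> Pow {1..m}"
  by auto

lemma csign_cocycle:
  assumes "A \<in> Pow {1..m}" "B \<in> Pow {1..m}" "E \<in> Pow {1..m}"
  shows "csign ((A - B) \<union> (B - A)) E * csign A B = csign A ((B - E) \<union> (E - B)) * csign B E"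
proof -
  have f: "finite A" "finite B" "finite E" using assms by (meson PowD finite_atLeastAtMost finite_subset)+
  show ?thesis using csign_symdiff_left[OF f(1,2,3)] csign_symdiff_right[OF f(1,2,3)] by simp
qed

lemma swap3: "(\<Sum>x\<in>X. \<Sum>y\<in>Y. \<Sum>z\<in>Z. f x y z) = (\<Sum>y\<in>Y. \<Sum>z\<in>Z. \<Sum>x\<in>X. f x y z)"
  by (rule trans[OF sum.swap], rule sum.cong[OF refl], rule sum.swap)

lemma clmul_assoc: "clmul m (clmul m a b) c = clmul m a (clmul m b c)"
proof
  fix C
  let ?P = "Pow {1..m}"
  let ?sd = "\<lambda>A B. (A - B) \<union> (B - A)"
  have L: "clmul m (clmul m a b) c C = (\<Sum>E\<in>?P. \<Sum>A\<in>?P. \<Sum>B\<in>?P.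
       if ?sd (?sd A B) E = C then csign (?sd A B) E * csign A B * a A * b B * c E else 0)"
  proof -
    have "clmul m (clmul m a b) c C = (\<Sum>D\<in>?P. \<Sum>E\<in>?P. \<Sum>A\<in>?P. \<Sum>B\<in>?P.
       if ?sd A B = D then (if ?sd D E = C then csign D E * csign A B * a A * b B * c E else 0) else 0)"
      unfolding clmul_def by (unfold expand_aux aux_if) (simp only: mult.assoc)
    also have "\<dots> = (\<Sum>E\<in>?P. \<Sum>A\<in>?P. \<Sum>B\<in>?P. \<Sum>D\<in>?P.
       if ?sd A B = D then (if ?sd D E = C then csign D E * csign A B * a A * b B * c E else 0) else 0)"
      by (rule trans[OF sum.swap], rule sum.cong[OF refl], rule swap3)
    also have "\<dots> = (\<Sum>E\<in>?P. \<Sum>A\<in>?P. \<Sum>B\<in>?P.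
       if ?sd (?sd A B) E = C then csign (?sd A B) E * csign A B * a A * b B * c E else 0)"
      by (intro sum.cong refl) (simp only: sum.delta' finite_Pow_iff finite_atLeastAtMost sd_Pow if_True)
    finally show ?thesis .
  qed
  have R: "clmul m a (clmul m b c) C = (\<Sum>A\<in>?P. \<Sum>B\<in>?P. \<Sum>E\<in>?P.
       if ?sd A (?sd B E) = C then csign A (?sd B E) * csign B E * a A * b B * c E else 0)"
  proof -
    have "clmul m a (clmul m b c) C = (\<Sum>A\<in>?P. \<Sum>F\<in>?P. \<Sum>B\<in>?P. \<Sum>E\<in>?P.
       if ?sd B E = F then (if ?sd A F = C then csign A F * a A * (csign B E * b B * c E) else 0) else 0)"
      unfolding clmul_def by (unfold expand_aux2 aux_if2) (simp only: mult.assoc)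
    also have "\<dots> = (\<Sum>A\<in>?P. \<Sum>B\<in>?P. \<Sum>E\<in>?P. \<Sum>F\<in>?P.
       if ?sd B E = F then (if ?sd A F = C then csign A F * a A * (csign B E * b B * c E) else 0) else 0)"
      by (rule sum.cong[OF refl], rule swap3)
    also have "\<dots> = (\<Sum>A\<in>?P. \<Sum>B\<in>?P. \<Sum>E\<in>?P.
       if ?sd A (?sd B E) = C then csign A (?sd B E) * csign B E * a A * b B * c E else 0)"
      by (intro sum.cong refl) (simp only: sum.delta' finite_Pow_iff finite_atLeastAtMost sd_Pow if_True mult_ac)
    finally show ?thesis .
  qed
  have "(\<Sum>E\<in>?P. \<Sum>A\<in>?P. \<Sum>B\<in>?P.
       if ?sd (?sd A B) E = C then csign (?sd A B) E * csign A B * a A * b B * c E else 0)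
     = (\<Sum>A\<in>?P. \<Sum>B\<in>?P. \<Sum>E\<in>?P.
       if ?sd (?sd A B) E = C then csign (?sd A B) E * csign A B * a A * b B * c E else 0)"
    by (rule swap3)
  also have "\<dots> = (\<Sum>A\<in>?P. \<Sum>B\<in>?P. \<Sum>E\<in>?P.
       if ?sd A (?sd B E) = C then csign A (?sd B E) * csign B E * a A * b B * c E else 0)"
  proof (intro sum.cong refl)
    fix A B E assume h: "A \<in> ?P" "B \<in> ?P" "E \<in> ?P"
    have e: "?sd (?sd A B) E = ?sd A (?sd B E)" by auto
    show "(if ?sd (?sd A B) E = C then csign (?sd A B) E * csign A B * a A * b B * c E else 0) =
          (if ?sd A (?sd B E) = C then csign A (?sd B E) * csign B E * a A * b B * c E else 0)"
      using csign_cocycle[OF h] e by simp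
  qed
  finally show "clmul m (clmul m a b) c C = clmul m a (clmul m b c) C" using L R by simp
qed


lemma clairaut2:
  fixes p ps pt pst pts :: "real \<Rightarrow> real \<Rightarrow> real"
  assumes ds: "\<And>s t. ((\<lambda>s. p s t) has_real_derivative ps s t) (at s)"
    and dt: "\<And>s t. ((\<lambda>t. p s t) has_real_derivative pt s t) (at t)"
    and dst: "\<And>s t. ((\<lambda>t. ps s t) has_real_derivative pst s t) (at t)"
    and dts: "\<And>s t. ((\<lambda>s. pt s t) has_real_derivative pts s t) (at s)"
    and c1: "\<And>e. e > 0 \<Longrightarrow> \<exists>d>0. \<forall>s t. \<bar>s - s0\<bar> < d \<and> \<bar>t - t0\<bar> < d \<longrightarrow> \<bar>pst s t - pst s0 t0\<bar> < e"
    and c2: "\<And>e. e > 0 \<Longrightarrow> \<exists>d>0. \<forall>s t. \<bar>s - s0\<bar> < d \<and> \<bar>t - t0\<bar> < d \<longrightarrow> \<bar>pts s t - pts s0 t0\<bar> < e"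
  shows "pst s0 t0 = pts s0 t0"
proof (rule ccontr)
  assume ne: "pst s0 t0 \<noteq> pts s0 t0"
  define e where "e = \<bar>pst s0 t0 - pts s0 t0\<bar> / 2"
  have e: "e > 0" using ne by (simp add: e_def)
  obtain d1 where d1: "d1 > 0" "\<forall>s t. \<bar>s - s0\<bar> < d1 \<and> \<bar>t - t0\<bar> < d1 \<longrightarrow> \<bar>pst s t - pst s0 t0\<bar> < e"
    using c1[OF e] by blast
  obtain d2 where d2: "d2 > 0" "\<forall>s t. \<bar>s - s0\<bar> < d2 \<and> \<bar>t - t0\<bar> < d2 \<longrightarrow> \<bar>pts s t - pts s0 t0\<bar> < e"
    using c2[OF e] by blast
  define h where "h = min d1 d2 / 2"
  have h: "h > 0" "h < d1" "h < d2" using d1 d2 by (auto simp: h_def)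
  define D where "D = p (s0 + h) (t0 + h) - p (s0 + h) t0 - p s0 (t0 + h) + p s0 t0"
  obtain xi where xi: "s0 < xi" "xi < s0 + h"
    "(p (s0 + h) (t0 + h) - p (s0 + h) t0) - (p s0 (t0 + h) - p s0 t0) = h * (ps xi (t0 + h) - ps xi t0)"
    using MVT2[of s0 "s0 + h" "\<lambda>s. p s (t0 + h) - p s t0" "\<lambda>s. ps s (t0 + h) - ps s t0",
      OF _ DERIV_diff[OF ds ds]] h(1) by auto
  obtain eta where eta: "t0 < eta" "eta < t0 + h" "ps xi (t0 + h) - ps xi t0 = h * pst xi eta"
    using MVT2[of t0 "t0 + h" "\<lambda>t. ps xi t" "\<lambda>t. pst xi t"] h(1) dst by auto
  obtain eta' where eta': "t0 < eta'" "eta' < t0 + h"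
    "(p (s0 + h) (t0 + h) - p s0 (t0 + h)) - (p (s0 + h) t0 - p s0 t0) = h * (pt (s0 + h) eta' - pt s0 eta')"
    using MVT2[of t0 "t0 + h" "\<lambda>t. p (s0 + h) t - p s0 t" "\<lambda>t. pt (s0 + h) t - pt s0 t",
      OF _ DERIV_diff[OF dt dt]] h(1) by auto
  obtain xi' where xi': "s0 < xi'" "xi' < s0 + h" "pt (s0 + h) eta' - pt s0 eta' = h * pts xi' eta'"
    using MVT2[of s0 "s0 + h" "\<lambda>s. pt s eta'" "\<lambda>s. pts s eta'"] h(1) dts by auto
  have "h * (h * pst xi eta) = h * (h * pts xi' eta')"
    using xi(3) eta(3) eta'(3) xi'(3) by (simp add: algebra_simps)
  then have eq: "pst xi eta = pts xi' eta'" using h(1) by simp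
  have "\<bar>pst xi eta - pst s0 t0\<bar> < e" using d1(2) xi eta h by auto
  moreover have "\<bar>pts xi' eta' - pts s0 t0\<bar> < e" using d2(2) xi' eta' h by auto
  ultimately have "\<bar>pst s0 t0 - pts s0 t0\<bar> < 2 * e" using eq by linarith
  then show False by (simp add: e_def)
qed


definition spd :: "nat \<Rightarrow> ((nat \<Rightarrow> real) \<Rightarrow> real) \<Rightarrow> (nat \<Rightarrow> real) \<Rightarrow> real" where
  "spd j \<phi> x = deriv (\<lambda>t. \<phi> (x(j := t))) (x j)"

fun spds :: "nat list \<Rightarrow> ((nat \<Rightarrow> real) \<Rightarrow> real) \<Rightarrow> (nat \<Rightarrow> real) \<Rightarrow> real" where
  "spds [] \<phi> = \<phi>"
| "spds (j # js) \<phi> = spd j (spds js \<phi>)"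

definition dirdiff :: "nat \<Rightarrow> ((nat \<Rightarrow> real) \<Rightarrow> real) \<Rightarrow> bool" where
  "dirdiff j \<phi> \<longleftrightarrow> (\<forall>x. (\<lambda>t. \<phi> (x(j := t))) differentiable (at (x j)))"

definition ssm :: "nat \<Rightarrow> ((nat \<Rightarrow> real) \<Rightarrow> real) \<Rightarrow> bool" where
  "ssm m \<phi> \<longleftrightarrow> (\<forall>js\<in>lists {2..m}. continuous_on UNIV (spds js \<phi>) \<and>
      (\<forall>j\<in>{2..m}. dirdiff j (spds js \<phi>)))"

lemma pd_spd: "pd j f x C = spd j (\<lambda>x. f x C) x"
  by (simp add: pd_def spd_def)

lemma pds_spds': "(\<lambda>x. pds js f x C) = spds js (\<lambda>x. f x C)"
  by (induction js) (simp_all add: pd_spd)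

lemma pds_spds: "pds js f x C = spds js (\<lambda>x. f x C) x"
  using pds_spds'[of js f C] by (metis (no_types))

lemma smooth_ssm: "smooth_y m f \<longleftrightarrow> (\<forall>C. ssm m (\<lambda>x. f x C))"
  unfolding smooth_y_def ssm_def dirdiff_def pds_spds by blast

lemma dirdiff_DERIV:
  assumes "dirdiff j \<phi>"
  shows "((\<lambda>t. \<phi> (x(j := t))) has_real_derivative spd j \<phi> (x(j := s))) (at s)"
proof -
  have "(\<lambda>t. \<phi> ((x(j := s))(j := t))) differentiable (at ((x(j := s)) j))"
    using assms unfolding dirdiff_def by blast
  then have "(\<lambda>t. \<phi> (x(j := t))) differentiable (at s)" by simp
  then have "((\<lambda>t. \<phi> (x(j := t))) has_real_derivative deriv (\<lambda>t. \<phi> (x(j := t))) s) (at s)"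
    using DERIV_deriv_iff_real_differentiable by blast
  then show ?thesis by (simp add: spd_def)
qed

lemma dirdiff_DERIV':
  assumes "dirdiff j \<phi>"
  shows "((\<lambda>t. \<phi> (x(j := t))) has_real_derivative spd j \<phi> x) (at (x j))"
  using dirdiff_DERIV[OF assms, of x "x j"] by simp

lemma spd_lincomb:
  assumes "finite I" "\<And>i. i \<in> I \<Longrightarrow> dirdiff j (\<phi> i)"
  shows "spd j (\<lambda>x. \<Sum>i\<in>I. a i * \<phi> i x) = (\<lambda>x. \<Sum>i\<in>I. a i * spd j (\<phi> i) x)"
proof
  fix x
  have "((\<lambda>t. \<Sum>i\<in>I. a i * \<phi> i (x(j := t))) has_real_derivative (\<Sum>i\<in>I. a i * spd j (\<phi> i) x)) (at (x j))"
    by (intro DERIV_sum DERIV_cmult dirdiff_DERIV' assms)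
  then show "spd j (\<lambda>x. \<Sum>i\<in>I. a i * \<phi> i x) x = (\<Sum>i\<in>I. a i * spd j (\<phi> i) x)"
    unfolding spd_def by (rule DERIV_imp_deriv)
qed

lemma dirdiff_lincomb:
  assumes "finite I" "\<And>i. i \<in> I \<Longrightarrow> dirdiff j (\<phi> i)"
  shows "dirdiff j (\<lambda>x. \<Sum>i\<in>I. a i * \<phi> i x)"
  unfolding dirdiff_def
proof
  fix x
  have "((\<lambda>t. \<Sum>i\<in>I. a i * \<phi> i (x(j := t))) has_real_derivative (\<Sum>i\<in>I. a i * spd j (\<phi> i) x)) (at (x j))"
    by (intro DERIV_sum DERIV_cmult dirdiff_DERIV' assms)
  then show "(\<lambda>t. \<Sum>i\<in>I. a i * \<phi> i (x(j := t))) differentiable at (x j)"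
    using real_differentiable_def by blast
qed

lemma spds_lincomb:
  assumes "finite I" "\<And>i. i \<in> I \<Longrightarrow> ssm m (\<phi> i)"
  shows "js \<in> lists {2..m} \<Longrightarrow> spds js (\<lambda>x. \<Sum>i\<in>I. a i * \<phi> i x) = (\<lambda>x. \<Sum>i\<in>I. a i * spds js (\<phi> i) x)"
proof (induction js)
  case Nil then show ?case by simp
next
  case (Cons j js)
  have js: "js \<in> lists {2..m}" and j: "j \<in> {2..m}" using Cons.prems by auto
  have "dirdiff j (spds js (\<phi> i))" if "i \<in> I" for i
    using assms(2)[OF that] js j unfolding ssm_def by blast
  then show ?case using Cons.IH[OF js] by (simp add: spd_lincomb assms(1))
qed

lemma ssm_lincomb:
  assumes "finite I" "\<And>i. i \<in> I \<Longrightarrow> ssm m (\<phi> i)"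
  shows "ssm m (\<lambda>x. \<Sum>i\<in>I. a i * \<phi> i x)"
  unfolding ssm_def
proof (intro ballI conjI)
  fix js assume js: "js \<in> lists {2..m}"
  have eq: "spds js (\<lambda>x. \<Sum>i\<in>I. a i * \<phi> i x) = (\<lambda>x. \<Sum>i\<in>I. a i * spds js (\<phi> i) x)"
    by (rule spds_lincomb[OF assms js])
  have "continuous_on UNIV (spds js (\<phi> i))" if "i \<in> I" for i
    using assms(2)[OF that] js unfolding ssm_def by blast
  then show "continuous_on UNIV (spds js (\<lambda>x. \<Sum>i\<in>I. a i * \<phi> i x))"
    unfolding eq by (intro continuous_intros) auto
  fix j assume j: "j \<in> {2..m}"
  show "dirdiff j (spds js (\<lambda>x. \<Sum>i\<in>I. a i * \<phi> i x))"
    unfolding eq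
    using assms(2) js j unfolding ssm_def by (intro dirdiff_lincomb assms(1)) auto
qed

lemma spds_append: "spds js (spd j \<phi>) = spds (js @ [j]) \<phi>"
  by (induction js) auto

lemma ssm_spd:
  assumes "ssm m \<phi>" "j \<in> {2..m}"
  shows "ssm m (spd j \<phi>)"
  using assms unfolding ssm_def spds_append by auto

lemma ssm_dirdiff: "ssm m \<phi> \<Longrightarrow> j \<in> {2..m} \<Longrightarrow> dirdiff j \<phi>"
  unfolding ssm_def by (metis lists.Nil spds.simps(1))

lemma cont_eps:
  assumes "continuous_on UNIV (g :: real \<times> real \<Rightarrow> real)" "e > 0"
  shows "\<exists>d>0. \<forall>s t. \<bar>s - a\<bar> < d \<and> \<bar>t - b\<bar> < d \<longrightarrow> \<bar>g (s, t) - g (a, b)\<bar> < e"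
proof -
  obtain d where d: "d > 0" "\<forall>p. dist p (a, b) < d \<longrightarrow> dist (g p) (g (a, b)) < e"
    using assms unfolding continuous_on_iff by blast
  show ?thesis
  proof (intro exI[of _ "d / 2"] conjI allI impI)
    fix s t assume st: "\<bar>s - a\<bar> < d / 2 \<and> \<bar>t - b\<bar> < d / 2"
    have "dist (s, t) (a, b) \<le> \<bar>s - a\<bar> + \<bar>t - b\<bar>"
      unfolding dist_Pair_Pair dist_real_def using sqrt_sum_squares_le_sum_abs[of "\<bar>s - a\<bar>" "\<bar>t - b\<bar>"] by simp
    then have "dist (s, t) (a, b) < d" using st by linarith
    then show "\<bar>g (s, t) - g (a, b)\<bar> < e" using d(2) by (auto simp: dist_real_def)
  qed (use d in auto)
qed

lemma cont_slice:
  assumes "continuous_on UNIV (\<psi> :: (nat \<Rightarrow> real) \<Rightarrow> real)"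
  shows "continuous_on UNIV (\<lambda>p. \<psi> (x(i := fst p, j := snd p)))"
proof -
  have "continuous_on UNIV (\<lambda>p::real\<times>real. x(i := fst p, j := snd p))"
  proof (rule continuous_on_coordinatewise_then_product)
    fix k
    show "continuous_on UNIV (\<lambda>p::real\<times>real. (x(i := fst p, j := snd p)) k)"
      by (cases "k = j"; cases "k = i") (auto intro!: continuous_intros)
  qed
  then show ?thesis using continuous_on_compose2[OF assms] by auto
qed

lemma ssm_comm:
  assumes "ssm m \<phi>" "i \<in> {2..m}" "j \<in> {2..m}"
  shows "spd i (spd j \<phi>) = spd j (spd i \<phi>)"
proof (cases "i = j")
  case True then show ?thesis by simp
next
  case ne: False
  show ?thesis
  proof
    fix x
    define p where "p s t = \<phi> (x(i := s, j := t))" for s t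
    define ps where "ps s t = spd i \<phi> (x(i := s, j := t))" for s t
    define pt where "pt s t = spd j \<phi> (x(i := s, j := t))" for s t
    define pst where "pst s t = spd j (spd i \<phi>) (x(i := s, j := t))" for s t
    define pts where "pts s t = spd i (spd j \<phi>) (x(i := s, j := t))" for s t
    have upd: "x(i := s, j := t, i := s') = x(i := s', j := t)" for s t s'
      using ne by (simp add: fun_upd_twist)
    have ddi: "dirdiff i \<phi>" "dirdiff j \<phi>" "dirdiff j (spd i \<phi>)" "dirdiff i (spd j \<phi>)"
      using assms ssm_dirdiff ssm_spd by blast+
    have ds: "((\<lambda>s. p s t) has_real_derivative ps s t) (at s)" for s t
      using dirdiff_DERIV[OF ddi(1), of "x(j := t)" s] ne unfolding p_def ps_def
      by (simp add: fun_upd_twist)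
    have dt: "((\<lambda>t. p s t) has_real_derivative pt s t) (at t)" for s t
      using dirdiff_DERIV[OF ddi(2), of "x(i := s)" t] unfolding p_def pt_def by simp
    have dst: "((\<lambda>t. ps s t) has_real_derivative pst s t) (at t)" for s t
      using dirdiff_DERIV[OF ddi(3), of "x(i := s)" t] unfolding ps_def pst_def by simp
    have dts: "((\<lambda>s. pt s t) has_real_derivative pts s t) (at s)" for s t
      using dirdiff_DERIV[OF ddi(4), of "x(j := t)" s] ne unfolding pt_def pts_def
      by (simp add: fun_upd_twist)
    have c: "continuous_on UNIV (spd j (spd i \<phi>))" "continuous_on UNIV (spd i (spd j \<phi>))"
      using assms unfolding ssm_def by (metis lists.Cons lists.Nil spds.simps)+
    have c1: "\<exists>d>0. \<forall>s t. \<bar>s - x i\<bar> < d \<and> \<bar>t - x j\<bar> < d \<longrightarrow> \<bar>pst s t - pst (x i) (x j)\<bar> < e"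
      if "e > 0" for e
      using cont_eps[OF cont_slice[OF c(1), of x i j] that, where a = "x i" and b = "x j"] unfolding pst_def by simp
    have c2: "\<exists>d>0. \<forall>s t. \<bar>s - x i\<bar> < d \<and> \<bar>t - x j\<bar> < d \<longrightarrow> \<bar>pts s t - pts (x i) (x j)\<bar> < e"
      if "e > 0" for e
      using cont_eps[OF cont_slice[OF c(2), of x i j] that, where a = "x i" and b = "x j"] unfolding pts_def by simp
    have "pst (x i) (x j) = pts (x i) (x j)"
      by (rule clairaut2[OF ds dt dst dts c1 c2])
    then show "spd i (spd j \<phi>) x = spd j (spd i \<phi>) x"
      unfolding pst_def pts_def by simp
  qed
qed


definition cv :: "nat \<Rightarrow> clif \<Rightarrow> bool" where
  "cv m a \<longleftrightarrow> (\<forall>C. \<not> C \<subseteq> {1..m} \<longrightarrow> a C = 0)"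

definition one :: clif where "one = (\<lambda>C. if C = {} then 1 else 0)"

definition cK :: "nat set \<Rightarrow> nat set \<Rightarrow> nat set \<Rightarrow> real" where
  "cK A B D = (if (A - B) \<union> (B - A) = D then csign A B else 0)"

lemma clmul_K: "clmul m a b D = (\<Sum>A\<in>Pow {1..m}. \<Sum>B\<in>Pow {1..m}. cK A B D * a A * b B)"
  unfolding clmul_def cK_def by (intro sum.cong refl) simp

lemma clmul_cv: "cv m (clmul m a b)"
  unfolding cv_def
proof (intro allI impI)
  fix C assume C: "\<not> C \<subseteq> {1..m}"
  have "\<forall>A\<in>Pow {1..m}. \<forall>B\<in>Pow {1..m}. (A - B) \<union> (B - A) \<noteq> C" using C by blast
  then show "clmul m a b C = 0" unfolding clmul_def by simp
qed

lemma clmul_add_l: "clmul m (\<lambda>C. a C + b C) c D = clmul m a c D + clmul m b c D"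
  unfolding clmul_K by (simp add: sum.distrib[symmetric] ring_distribs)

lemma clmul_add_r: "clmul m a (\<lambda>C. b C + c C) D = clmul m a b D + clmul m a c D"
  unfolding clmul_K by (simp add: sum.distrib[symmetric] ring_distribs)

lemma clmul_diff_l: "clmul m (\<lambda>C. a C - b C) c D = clmul m a c D - clmul m b c D"
  unfolding clmul_K by (simp add: sum_subtractf[symmetric] ring_distribs)

lemma clmul_diff_r: "clmul m a (\<lambda>C. b C - c C) D = clmul m a b D - clmul m a c D"
  unfolding clmul_K by (simp add: sum_subtractf[symmetric] ring_distribs)

lemma clmul_scale_l: "clmul m (\<lambda>C. r * a C) c D = r * clmul m a c D"
  unfolding clmul_K by (simp add: sum_distrib_left mult_ac)

lemma clmul_scale_r: "clmul m a (\<lambda>C. r * c C) D = r * clmul m a c D"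
  unfolding clmul_K by (simp add: sum_distrib_left mult_ac)

lemma clmul_neg_l: "clmul m (\<lambda>C. - a C) c D = - clmul m a c D"
  using clmul_scale_l[of m "-1" a c D] by simp

lemma clmul_neg_r: "clmul m a (\<lambda>C. - c C) D = - clmul m a c D"
  using clmul_scale_r[of m a "-1" c D] by simp

lemma clmul_zero_l: "clmul m (\<lambda>C. 0) c D = 0"
  unfolding clmul_K by simp

lemma clmul_zero_r: "clmul m a (\<lambda>C. 0) D = 0"
  unfolding clmul_K by simp

lemma clmul_sum_l: "clmul m (\<lambda>C. \<Sum>i\<in>I. f i C) c D = (\<Sum>i\<in>I. clmul m (f i) c D)"
proof (cases "finite I")
  case True then show ?thesis
    by (induction I rule: finite_induct) (simp_all add: clmul_add_l clmul_zero_l)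
next
  case False then show ?thesis by (simp add: clmul_zero_l clmul_zero_r)
qed

lemma clmul_sum_r: "clmul m a (\<lambda>C. \<Sum>i\<in>I. f i C) D = (\<Sum>i\<in>I. clmul m a (f i) D)"
proof (cases "finite I")
  case True then show ?thesis
    by (induction I rule: finite_induct) (simp_all add: clmul_add_r clmul_zero_r)
next
  case False then show ?thesis by (simp add: clmul_zero_l clmul_zero_r)
qed

lemma csign_empty_l: "csign {} B = 1" by (simp add: csign_def)
lemma csign_empty_r: "csign A {} = 1" by (simp add: csign_def)

lemma clmul_one_l: "cv m a \<Longrightarrow> clmul m one a = a"
proof
  fix D assume a: "cv m a"
  have "clmul m one a D = (\<Sum>A\<in>Pow {1..m}. if A = {} then (\<Sum>B\<in>Pow {1..m}. cK {} B D * a B) else 0)"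
    unfolding clmul_K by (intro sum.cong refl) (simp add: one_def)
  also have "\<dots> = (\<Sum>B\<in>Pow {1..m}. cK {} B D * a B)" by simp
  also have "\<dots> = (\<Sum>B\<in>Pow {1..m}. if B = D then a B else 0)"
    by (intro sum.cong refl) (simp add: cK_def csign_empty_l)
  also have "\<dots> = a D" using a by (auto simp: cv_def)
  finally show "clmul m one a D = a D" .
qed

lemma clmul_one_r: "cv m a \<Longrightarrow> clmul m a one = a"
proof
  fix D assume a: "cv m a"
  have "clmul m a one D = (\<Sum>A\<in>Pow {1..m}. \<Sum>B\<in>Pow {1..m}. if B = {} then cK A {} D * a A else 0)"
    unfolding clmul_K by (intro sum.cong refl) (simp add: one_def)
  also have "\<dots> = (\<Sum>A\<in>Pow {1..m}. cK A {} D * a A)" by simp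
  also have "\<dots> = (\<Sum>A\<in>Pow {1..m}. if A = D then a A else 0)"
    by (intro sum.cong refl) (simp add: cK_def csign_empty_r)
  also have "\<dots> = a D" using a by (auto simp: cv_def)
  finally show "clmul m a one D = a D" .
qed

lemma clmul_gen_gen:
  assumes "j \<in> {1..m}" "k \<in> {1..m}"
  shows "clmul m (gen j) (gen k) D = cK {j} {k} D"
proof -
  have "clmul m (gen j) (gen k) D = (\<Sum>A\<in>Pow {1..m}. if A = {j} then
          (\<Sum>B\<in>Pow {1..m}. if B = {k} then cK {j} {k} D else 0) else 0)"
    unfolding clmul_K
  proof (intro sum.cong refl)
    fix A assume "A \<in> Pow {1..m}"
    show "(\<Sum>B\<in>Pow {1..m}. cK A B D * gen j A * gen k B) =
      (if A = {j} then \<Sum>B\<in>Pow {1..m}. if B = {k} then cK {j} {k} D else 0 else 0)"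
    proof (cases "A = {j}")
      case True
      have "cK A B D * gen j A * gen k B = (if B = {k} then cK {j} {k} D else 0)" for B
        using True by (simp add: gen_def)
      then show ?thesis using True by simp
    qed (simp add: gen_def)
  qed
  also have "\<dots> = cK {j} {k} D"
    using assms by (simp only: sum.delta finite_Pow_iff finite_atLeastAtMost) simp
  finally show ?thesis .
qed

lemma csign_jj: "csign {j} {j} = -1"
proof -
  have e: "{(i, l). i \<in> {j} \<and> l \<in> {j} \<and> l < i} = {}" by auto
  show ?thesis by (simp only: csign_def e) simp
qed

lemma csign_jk: "j < k \<Longrightarrow> csign {j} {k} = 1 \<and> csign {k} {j} = -1"
proof -
  assume jk: "j < k"
  have e1: "{(i, l). i \<in> {j} \<and> l \<in> {k} \<and> l < i} = {}" using jk by auto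
  have e2: "{(i, l). i \<in> {k} \<and> l \<in> {j} \<and> l < i} = {(k, j)}" using jk by auto
  show ?thesis using jk by (simp only: csign_def e1 e2) simp
qed

lemma gen_sq: "j \<in> {1..m} \<Longrightarrow> clmul m (gen j) (gen j) = (\<lambda>C. - one C)"
  by (rule ext) (simp add: clmul_gen_gen cK_def csign_jj one_def)

lemma gen_anti: "j \<in> {1..m} \<Longrightarrow> k \<in> {1..m} \<Longrightarrow> j \<noteq> k \<Longrightarrow>
   clmul m (gen j) (gen k) = (\<lambda>C. - clmul m (gen k) (gen j) C)"
proof (rule ext)
  fix D assume a: "j \<in> {1..m}" "k \<in> {1..m}" "j \<noteq> k"
  have s: "csign {j} {k} = - csign {k} {j}"
    using a(3) csign_jk[of j k] csign_jk[of k j] by (cases "j < k") auto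
  have e: "{k, j} = {j, k}" by auto
  show "clmul m (gen j) (gen k) D = - clmul m (gen k) (gen j) D"
    using a by (simp add: clmul_gen_gen cK_def s e)
qed

lemma gen_cv: "j \<in> {1..m} \<Longrightarrow> cv m (gen j)"
  by (auto simp: cv_def gen_def)

lemma one_cv: "cv m one"
  by (auto simp: cv_def one_def)


lemma ssm_add: "ssm m \<phi> \<Longrightarrow> ssm m \<psi> \<Longrightarrow> ssm m (\<lambda>x. \<phi> x + \<psi> x)"
  using ssm_lincomb[of "UNIV::bool set" m "\<lambda>b. if b then \<phi> else \<psi>" "\<lambda>_. 1"]
  by (simp add: UNIV_bool add.commute)

lemma ssm_scale: "ssm m \<phi> \<Longrightarrow> ssm m (\<lambda>x. r * \<phi> x)"
  using ssm_lincomb[of "{()}" m "\<lambda>_. \<phi>" "\<lambda>_. r"] by simp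

lemma ssm_sum: "finite I \<Longrightarrow> (\<And>i. i \<in> I \<Longrightarrow> ssm m (\<phi> i)) \<Longrightarrow> ssm m (\<lambda>x. \<Sum>i\<in>I. \<phi> i x)"
  using ssm_lincomb[of I m \<phi> "\<lambda>_. 1"] by simp


lemma spd_add: "dirdiff j \<phi> \<Longrightarrow> dirdiff j \<psi> \<Longrightarrow> spd j (\<lambda>x. \<phi> x + \<psi> x) = (\<lambda>x. spd j \<phi> x + spd j \<psi> x)"
  using spd_lincomb[of "UNIV::bool set" j "\<lambda>b. if b then \<phi> else \<psi>" "\<lambda>_. 1"]
  by (simp add: UNIV_bool add.commute)

lemma spd_scale: "dirdiff j \<phi> \<Longrightarrow> spd j (\<lambda>x. r * \<phi> x) = (\<lambda>x. r * spd j \<phi> x)"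
  using spd_lincomb[of "{()}" j "\<lambda>_. \<phi>" "\<lambda>_. r"] by simp

lemma spd_sum: "finite I \<Longrightarrow> (\<And>i. i \<in> I \<Longrightarrow> dirdiff j (\<phi> i)) \<Longrightarrow>
    spd j (\<lambda>x. \<Sum>i\<in>I. \<phi> i x) = (\<lambda>x. \<Sum>i\<in>I. spd j (\<phi> i) x)"
  using spd_lincomb[of I j \<phi> "\<lambda>_. 1"] by simp

lemma dirdiff_add: "dirdiff j \<phi> \<Longrightarrow> dirdiff j \<psi> \<Longrightarrow> dirdiff j (\<lambda>x. \<phi> x + \<psi> x)"
  using dirdiff_lincomb[of "UNIV::bool set" j "\<lambda>b. if b then \<phi> else \<psi>" "\<lambda>_. 1"]
  by (simp add: UNIV_bool add.commute)

definition nice :: "nat \<Rightarrow> ((nat \<Rightarrow> real) \<Rightarrow> clif) \<Rightarrow> bool" where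
  "nice m f \<longleftrightarrow> clif_valued m f \<and> depends_on_y m f \<and> (\<forall>C. ssm m (\<lambda>x. f x C))"

lemma nice_cv: "nice m f \<Longrightarrow> cv m (f x)"
  unfolding nice_def clif_valued_def cv_def by blast

lemma nice_ssm: "nice m f \<Longrightarrow> ssm m (\<lambda>x. f x C)"
  unfolding nice_def by blast

lemma nice_dirdiff: "nice m f \<Longrightarrow> j \<in> {2..m} \<Longrightarrow> dirdiff j (\<lambda>x. f x C)"
  using nice_ssm ssm_dirdiff by blast

lemma nice_dep: "nice m f \<Longrightarrow> (\<forall>j\<in>{2..m}. x j = x' j) \<Longrightarrow> f x = f x'"
  unfolding nice_def depends_on_y_def by blast

lemma cv_add: "cv m a \<Longrightarrow> cv m b \<Longrightarrow> cv m (\<lambda>C. a C + b C)"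
  unfolding cv_def by simp

lemma cv_scale: "cv m a \<Longrightarrow> cv m (\<lambda>C. r * a C)"
  unfolding cv_def by simp

lemma cv_sum: "(\<And>i. i \<in> I \<Longrightarrow> cv m (a i)) \<Longrightarrow> cv m (\<lambda>C. \<Sum>i\<in>I. a i C)"
  unfolding cv_def by simp

lemma nice_intro:
  assumes "\<And>x. cv m (f x)" "\<And>x x'. \<forall>j\<in>{2..m}. x j = x' j \<Longrightarrow> f x = f x'"
    "\<And>C. ssm m (\<lambda>x. f x C)"
  shows "nice m f"
  using assms unfolding nice_def clif_valued_def depends_on_y_def cv_def by blast

lemma nice_add: "nice m f \<Longrightarrow> nice m g \<Longrightarrow> nice m (\<lambda>x C. f x C + g x C)"
proof (rule nice_intro)
  fix x x' :: "nat \<Rightarrow> real"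
  assume "nice m f" "nice m g" "\<forall>j\<in>{2..m}. x j = x' j"
  then have "f x = f x'" "g x = g x'" by (blast intro: nice_dep)+
  then show "(\<lambda>C. f x C + g x C) = (\<lambda>C. f x' C + g x' C)" by simp
qed (auto intro: ssm_add nice_ssm cv_add nice_cv)

lemma nice_scale: "nice m f \<Longrightarrow> nice m (\<lambda>x C. r * f x C)"
proof (rule nice_intro)
  fix x x' :: "nat \<Rightarrow> real"
  assume "nice m f" "\<forall>j\<in>{2..m}. x j = x' j"
  then have "f x = f x'" by (blast intro: nice_dep)
  then show "(\<lambda>C. r * f x C) = (\<lambda>C. r * f x' C)" by simp
qed (auto intro: ssm_scale nice_ssm cv_scale nice_cv)

lemma nice_sum:
  assumes I: "finite I" and f: "\<And>i. i \<in> I \<Longrightarrow> nice m (f i)"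
  shows "nice m (\<lambda>x C. \<Sum>i\<in>I. f i x C)"
proof (rule nice_intro)
  fix x x' :: "nat \<Rightarrow> real"
  assume "\<forall>j\<in>{2..m}. x j = x' j"
  then have "\<And>i. i \<in> I \<Longrightarrow> f i x = f i x'" using f by (blast intro: nice_dep)
  then show "(\<lambda>C. \<Sum>i\<in>I. f i x C) = (\<lambda>C. \<Sum>i\<in>I. f i x' C)" by simp
next
  fix x show "cv m (\<lambda>C. \<Sum>i\<in>I. f i x C)" using f by (intro cv_sum nice_cv)
next
  fix C show "ssm m (\<lambda>x. \<Sum>i\<in>I. f i x C)" using I f by (intro ssm_sum nice_ssm)
qed

lemma ssm_cl2: "(\<And>D. ssm m (\<lambda>x. f x D)) \<Longrightarrow>
   ssm m (\<lambda>x. \<Sum>A\<in>Pow {1..m}. \<Sum>B\<in>Pow {1..m}. k A B * f x (h A B))"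
  by (intro ssm_lincomb[of _ m _ "\<lambda>_. 1", simplified] ssm_lincomb) auto

lemma spd_cl2:
  assumes "\<And>D. dirdiff j (\<lambda>x. f x D)"
  shows "spd j (\<lambda>x. \<Sum>A\<in>Pow {1..m::nat}. \<Sum>B\<in>Pow {1..m}. k A B * f x (h A B)) =
   (\<lambda>x. \<Sum>A\<in>Pow {1..m}. \<Sum>B\<in>Pow {1..m}. k A B * spd j (\<lambda>x. f x (h A B)) x)"
proof -
  have d: "dirdiff j (\<lambda>x. \<Sum>B\<in>Pow {1..m}. k A B * f x (h A B))" for A
    by (rule dirdiff_lincomb) (auto intro: assms)
  have "spd j (\<lambda>x. \<Sum>A\<in>Pow {1..m}. (\<lambda>x. \<Sum>B\<in>Pow {1..m}. k A B * f x (h A B)) x) =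
     (\<lambda>x. \<Sum>A\<in>Pow {1..m}. spd j (\<lambda>x. \<Sum>B\<in>Pow {1..m}. k A B * f x (h A B)) x)"
    by (rule spd_sum) (simp_all only: d finite_Pow_iff finite_atLeastAtMost)
  also have "\<dots> = (\<lambda>x. \<Sum>A\<in>Pow {1..m}. \<Sum>B\<in>Pow {1..m}. k A B * spd j (\<lambda>x. f x (h A B)) x)"
    by (subst spd_lincomb) (auto intro: assms)
  finally show ?thesis by simp
qed

lemma clmul_K_l: "clmul m u a C = (\<Sum>A\<in>Pow {1..m}. \<Sum>B\<in>Pow {1..m}. (cK A B C * u A) * a B)"
  unfolding clmul_K by (simp add: mult_ac)

lemma clmul_K_r: "clmul m a u C = (\<Sum>A\<in>Pow {1..m}. \<Sum>B\<in>Pow {1..m}. (cK A B C * u B) * a A)"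
  unfolding clmul_K by (simp add: mult_ac)

lemma nice_lmul: "nice m f \<Longrightarrow> nice m (\<lambda>x. clmul m u (f x))"
proof (rule nice_intro)
  fix x x' :: "nat \<Rightarrow> real"
  assume "nice m f" "\<forall>j\<in>{2..m}. x j = x' j"
  then have "f x = f x'" by (blast intro: nice_dep)
  then show "clmul m u (f x) = clmul m u (f x')" by simp
next
  fix C assume "nice m f"
  then have "\<And>D. ssm m (\<lambda>x. f x D)" by (rule nice_ssm)
  then show "ssm m (\<lambda>x. clmul m u (f x) C)"
    unfolding clmul_K_l by (rule ssm_cl2[where h = "\<lambda>A B. B"])
qed (rule clmul_cv)

lemma nice_rmul: "nice m f \<Longrightarrow> nice m (\<lambda>x. clmul m (f x) u)"
proof (rule nice_intro)
  fix x x' :: "nat \<Rightarrow> real"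
  assume "nice m f" "\<forall>j\<in>{2..m}. x j = x' j"
  then have "f x = f x'" by (blast intro: nice_dep)
  then show "clmul m (f x) u = clmul m (f x') u" by simp
next
  fix C assume "nice m f"
  then have "\<And>D. ssm m (\<lambda>x. f x D)" by (rule nice_ssm)
  then show "ssm m (\<lambda>x. clmul m (f x) u C)"
    unfolding clmul_K_r by (rule ssm_cl2[where h = "\<lambda>A B. A"])
qed (rule clmul_cv)

lemma pd_lmul: "nice m f \<Longrightarrow> j \<in> {2..m} \<Longrightarrow> pd j (\<lambda>x. clmul m u (f x)) = (\<lambda>x. clmul m u (pd j f x))"
  unfolding pd_spd[abs_def] clmul_K_l
  by (intro ext, subst spd_cl2[where h = "\<lambda>A B. B"]) (auto intro: nice_dirdiff)

lemma pd_rmul: "nice m f \<Longrightarrow> j \<in> {2..m} \<Longrightarrow> pd j (\<lambda>x. clmul m (f x) u) = (\<lambda>x. clmul m (pd j f x) u)"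
  unfolding pd_spd[abs_def] clmul_K_r
  by (intro ext, subst spd_cl2[where h = "\<lambda>A B. A"]) (auto intro: nice_dirdiff)

lemma pd_add: "nice m f \<Longrightarrow> nice m g \<Longrightarrow> j \<in> {2..m} \<Longrightarrow>
    pd j (\<lambda>x C. f x C + g x C) = (\<lambda>x C. pd j f x C + pd j g x C)"
  unfolding pd_spd[abs_def] by (simp add: spd_add nice_dirdiff)

lemma pd_scale: "nice m f \<Longrightarrow> j \<in> {2..m} \<Longrightarrow>
    pd j (\<lambda>x C. r * f x C) = (\<lambda>x C. r * pd j f x C)"
  unfolding pd_spd[abs_def] by (simp add: spd_scale nice_dirdiff)

lemma pd_diff: "nice m f \<Longrightarrow> nice m g \<Longrightarrow> j \<in> {2..m} \<Longrightarrow>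
    pd j (\<lambda>x C. f x C - g x C) = (\<lambda>x C. pd j f x C - pd j g x C)"
  using pd_add[of m f "\<lambda>x C. (-1) * g x C" j] pd_scale[of m g j "-1"] nice_scale[of m g "-1"] by simp

lemma pd_sum:
  assumes "finite I" "\<And>i. i \<in> I \<Longrightarrow> nice m (f i)" "j \<in> {2..m}"
  shows "pd j (\<lambda>x C. \<Sum>i\<in>I. f i x C) = (\<lambda>x C. \<Sum>i\<in>I. pd j (f i) x C)"
proof (intro ext)
  fix x C
  have "spd j (\<lambda>x. \<Sum>i\<in>I. f i x C) = (\<lambda>x. \<Sum>i\<in>I. spd j (\<lambda>x. f i x C) x)"
    using assms by (intro spd_sum) (auto intro: nice_dirdiff[OF _ assms(3)])
  then show "pd j (\<lambda>x C. \<Sum>i\<in>I. f i x C) x C = (\<Sum>i\<in>I. pd j (f i) x C)"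
    by (simp add: pd_spd)
qed

lemma pd_fun: "(\<lambda>x. pd j f x C) = spd j (\<lambda>x. f x C)"
  by (simp add: pd_spd)

lemma nice_pd: "nice m f \<Longrightarrow> j \<in> {2..m} \<Longrightarrow> nice m (pd j f)"
proof -
  assume f: "nice m f" and j: "j \<in> {2..m}"
  have cv: "clif_valued m (pd j f)"
    using f unfolding nice_def clif_valued_def pd_def by simp
  have dep: "depends_on_y m (pd j f)"
    unfolding depends_on_y_def
  proof (intro allI impI)
    fix x x' :: "nat \<Rightarrow> real" assume a: "\<forall>j\<in>{2..m}. x j = x' j"
    have "f (x(j := t)) = f (x'(j := t))" for t
      using a by (intro nice_dep[OF f]) auto
    moreover have "x j = x' j" using a j by auto
    ultimately show "pd j f x = pd j f x'" unfolding pd_def by simp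
  qed
  have "ssm m (\<lambda>x. pd j f x C)" for C
    unfolding pd_fun using ssm_spd[OF nice_ssm[OF f] j] .
  then show ?thesis using cv dep unfolding nice_def by blast
qed

lemma pd_comm: "nice m f \<Longrightarrow> i \<in> {2..m} \<Longrightarrow> j \<in> {2..m} \<Longrightarrow> pd i (pd j f) = pd j (pd i f)"
  unfolding pd_spd[abs_def] pd_fun using ssm_comm[OF nice_ssm] by metis

lemma nice_zero: "nice m (\<lambda>x C. 0)"
proof -
  have "ssm m (\<lambda>x. \<Sum>i\<in>{}. (\<lambda>x. 0::real) x)" by (rule ssm_sum) auto
  then show ?thesis unfolding nice_def clif_valued_def depends_on_y_def by simp
qed


lemma clmul_negf_l: "clmul m (\<lambda>C. - a C) c = (\<lambda>D. - clmul m a c D)"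
  by (rule ext) (rule clmul_neg_l)
lemma clmul_negf_r: "clmul m a (\<lambda>C. - c C) = (\<lambda>D. - clmul m a c D)"
  by (rule ext) (rule clmul_neg_r)
lemma clmul_addf_l: "clmul m (\<lambda>C. a C + b C) c = (\<lambda>D. clmul m a c D + clmul m b c D)"
  by (rule ext) (rule clmul_add_l)
lemma clmul_addf_r: "clmul m a (\<lambda>C. b C + c C) = (\<lambda>D. clmul m a b D + clmul m a c D)"
  by (rule ext) (rule clmul_add_r)
lemma clmul_difff_l: "clmul m (\<lambda>C. a C - b C) c = (\<lambda>D. clmul m a c D - clmul m b c D)"
  by (rule ext) (rule clmul_diff_l)
lemma clmul_difff_r: "clmul m a (\<lambda>C. b C - c C) = (\<lambda>D. clmul m a b D - clmul m a c D)"
  by (rule ext) (rule clmul_diff_r)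
lemma clmul_scalef_l: "clmul m (\<lambda>C. r * a C) c = (\<lambda>D. r * clmul m a c D)"
  by (rule ext) (rule clmul_scale_l)
lemma clmul_scalef_r: "clmul m a (\<lambda>C. r * c C) = (\<lambda>D. r * clmul m a c D)"
  by (rule ext) (rule clmul_scale_r)
lemma clmul_sumf_l: "clmul m (\<lambda>C. \<Sum>i\<in>I. f i C) c = (\<lambda>D. \<Sum>i\<in>I. clmul m (f i) c D)"
  by (rule ext) (rule clmul_sum_l)
lemma clmul_sumf_r: "clmul m a (\<lambda>C. \<Sum>i\<in>I. f i C) = (\<lambda>D. \<Sum>i\<in>I. clmul m a (f i) D)"
  by (rule ext) (rule clmul_sum_r)
lemma clmul_zerof_l: "clmul m (\<lambda>C. 0) c = (\<lambda>D. 0)"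
  by (rule ext) (rule clmul_zero_l)
lemma clmul_zerof_r: "clmul m a (\<lambda>C. 0) = (\<lambda>D. 0)"
  by (rule ext) (rule clmul_zero_r)

lemma gen_sq2: "j \<in> {1..m} \<Longrightarrow> cv m a \<Longrightarrow> clmul m (gen j) (clmul m (gen j) a) = (\<lambda>D. - a D)"
  by (simp add: clmul_assoc[symmetric] gen_sq clmul_negf_l clmul_one_l)

lemma gen_sq3: "j \<in> {1..m} \<Longrightarrow> cv m a \<Longrightarrow> clmul m a (gen j) = b \<Longrightarrow> clmul m b (gen j) = (\<lambda>D. - a D)"
  by (auto simp add: clmul_assoc gen_sq clmul_negf_r clmul_one_r)

lemma E_E:
  assumes m: "m \<ge> 1" and a: "cv m a"
  shows "clmul m (clmul m (gen 1) (clmul m (clmul m (gen 1) a) (gen 1))) (gen 1) = a"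
proof -
  have g: "1 \<in> {1..m}" using m by simp
  show ?thesis
    using a by (simp add: clmul_assoc gen_sq[OF g, simplified] clmul_negf_r clmul_negf_l clmul_one_r gen_sq2[OF g, simplified] clmul_cv)
qed

lemma gen_E:
  assumes m: "m \<ge> 1" and j: "j \<in> {2..m}"
  shows "clmul m (gen j) (clmul m (clmul m (gen 1) a) (gen 1)) =
         (\<lambda>D. - clmul m (clmul m (gen 1) (clmul m (gen j) a)) (gen 1) D)"
proof -
  have g: "1 \<in> {1..m}" "j \<in> {1..m}" "j \<noteq> 1" using m j by auto
  have "clmul m (gen j) (clmul m (clmul m (gen 1) a) (gen 1)) =
        clmul m (clmul m (clmul m (gen j) (gen 1)) a) (gen 1)"
    by (simp add: clmul_assoc)
  also have "\<dots> = clmul m (clmul m (\<lambda>C. - clmul m (gen 1) (gen j) C) a) (gen 1)"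
    using gen_anti[OF g(2,1,3)] by simp
  also have "\<dots> = (\<lambda>D. - clmul m (clmul m (gen 1) (clmul m (gen j) a)) (gen 1) D)"
    by (simp add: clmul_negf_l clmul_assoc)
  finally show ?thesis .
qed

lemma E_gen:
  assumes m: "m \<ge> 1" and j: "j \<in> {2..m}"
  shows "clmul m (clmul m (clmul m (gen 1) a) (gen 1)) (gen j) =
         (\<lambda>D. - clmul m (clmul m (gen 1) (clmul m a (gen j))) (gen 1) D)"
proof -
  have g: "1 \<in> {1..m}" "j \<in> {1..m}" "j \<noteq> 1" using m j by auto
  have "clmul m (clmul m (clmul m (gen 1) a) (gen 1)) (gen j) =
        clmul m (clmul m (gen 1) a) (clmul m (gen 1) (gen j))"
    by (simp add: clmul_assoc)
  also have "\<dots> = clmul m (clmul m (gen 1) a) (\<lambda>C. - clmul m (gen j) (gen 1) C)"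
    using gen_anti[OF g(1,2) g(3)[symmetric]] by simp
  also have "\<dots> = (\<lambda>D. - clmul m (clmul m (gen 1) (clmul m a (gen j))) (gen 1) D)"
    by (simp add: clmul_negf_r clmul_assoc)
  finally show ?thesis .
qed

lemma sq_pair_r:
  assumes j: "j \<in> {1..m}" and k: "k \<in> {1..m}" and H: "cv m H"
  shows "clmul m (clmul m H (gen j)) (gen k) D + clmul m (clmul m H (gen k)) (gen j) D =
         (if j = k then - 2 * H D else 0)"
proof (cases "j = k")
  case True
  then show ?thesis using j H by (simp add: clmul_assoc gen_sq clmul_neg_r clmul_one_r)
next
  case False
  then show ?thesis using j k by (simp add: clmul_assoc gen_anti[OF k j] clmul_neg_r)
qed

lemma sq_pair_l:
  assumes j: "j \<in> {1..m}" and k: "k \<in> {1..m}" and H: "cv m H"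
  shows "clmul m (gen k) (clmul m (gen j) H) D + clmul m (gen j) (clmul m (gen k) H) D =
         (if j = k then - 2 * H D else 0)"
proof (cases "j = k")
  case True
  then show ?thesis using j H by (simp add: clmul_assoc[symmetric] gen_sq clmul_neg_l clmul_one_l)
next
  case False
  then show ?thesis using j k by (simp add: clmul_assoc[symmetric] gen_anti[OF k j] clmul_neg_l)
qed


definition fadd :: "((nat \<Rightarrow> real) \<Rightarrow> clif) \<Rightarrow> ((nat \<Rightarrow> real) \<Rightarrow> clif) \<Rightarrow> (nat \<Rightarrow> real) \<Rightarrow> clif" where
  "fadd f g = (\<lambda>x C. f x C + g x C)"
definition fsc :: "real \<Rightarrow> ((nat \<Rightarrow> real) \<Rightarrow> clif) \<Rightarrow> (nat \<Rightarrow> real) \<Rightarrow> clif" where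
  "fsc r f = (\<lambda>x C. r * f x C)"
definition Eop :: "nat \<Rightarrow> ((nat \<Rightarrow> real) \<Rightarrow> clif) \<Rightarrow> (nat \<Rightarrow> real) \<Rightarrow> clif" where
  "Eop m f = (\<lambda>x. clmul m (clmul m (gen 1) (f x)) (gen 1))"
definition Vop :: "nat \<Rightarrow> ((nat \<Rightarrow> real) \<Rightarrow> clif) \<Rightarrow> (nat \<Rightarrow> real) \<Rightarrow> clif" where
  "Vop m f = fadd (fadd f (fsc (-1) (Eop m f))) (rdy m f)"
definition Wop :: "nat \<Rightarrow> ((nat \<Rightarrow> real) \<Rightarrow> clif) \<Rightarrow> (nat \<Rightarrow> real) \<Rightarrow> clif" where
  "Wop m f = fadd (fadd f (fsc (-1) (Eop m f))) (fsc (-1) (rdy m f))"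
definition lap :: "nat \<Rightarrow> ((nat \<Rightarrow> real) \<Rightarrow> clif) \<Rightarrow> (nat \<Rightarrow> real) \<Rightarrow> clif" where
  "lap m f = (\<lambda>x C. \<Sum>j\<in>{2..m}. pd j (pd j f) x C)"

lemma Utilde_eq: "Utilde m f = fadd (fadd f (Eop m f)) (rdy m f)"
  by (intro ext) (simp add: Utilde_def fadd_def Eop_def)

lemma rdy_eq: "rdy m f = (\<lambda>x C. \<Sum>j\<in>{2..m}. clmul m (pd j f x) (gen j) C)"
  by (intro ext) (simp add: rdy_def)

lemma ldy_eq: "ldy m f = (\<lambda>x C. \<Sum>j\<in>{2..m}. clmul m (gen j) (pd j f x) C)"
  by (intro ext) (simp add: ldy_def)

lemma nice_fadd: "nice m f \<Longrightarrow> nice m g \<Longrightarrow> nice m (fadd f g)"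
  unfolding fadd_def by (rule nice_add)

lemma nice_fsc: "nice m f \<Longrightarrow> nice m (fsc r f)"
  unfolding fsc_def by (rule nice_scale)

lemma nice_Eop: "nice m f \<Longrightarrow> nice m (Eop m f)"
  unfolding Eop_def by (intro nice_rmul nice_lmul)

lemma nice_rdy: "nice m f \<Longrightarrow> nice m (rdy m f)"
  unfolding rdy_eq by (intro nice_sum nice_rmul nice_pd) auto

lemma nice_ldy: "nice m f \<Longrightarrow> nice m (ldy m f)"
  unfolding ldy_eq by (intro nice_sum nice_lmul nice_pd) auto

lemma nice_Utilde: "nice m f \<Longrightarrow> nice m (Utilde m f)"
  unfolding Utilde_eq by (intro nice_fadd nice_Eop nice_rdy)

lemma nice_Vop: "nice m f \<Longrightarrow> nice m (Vop m f)"
  unfolding Vop_def by (intro nice_fadd nice_fsc nice_Eop nice_rdy)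

lemma nice_Wop: "nice m f \<Longrightarrow> nice m (Wop m f)"
  unfolding Wop_def by (intro nice_fadd nice_fsc nice_Eop nice_rdy)

lemma pd_fadd: "nice m f \<Longrightarrow> nice m g \<Longrightarrow> j \<in> {2..m} \<Longrightarrow> pd j (fadd f g) = fadd (pd j f) (pd j g)"
  unfolding fadd_def by (rule pd_add)

lemma pd_fsc: "nice m f \<Longrightarrow> j \<in> {2..m} \<Longrightarrow> pd j (fsc r f) = fsc r (pd j f)"
  unfolding fsc_def by (rule pd_scale)

lemma pd_Eop: "nice m f \<Longrightarrow> j \<in> {2..m} \<Longrightarrow> pd j (Eop m f) = Eop m (pd j f)"
  unfolding Eop_def by (simp add: pd_rmul nice_lmul pd_lmul)

lemma rdy_fadd:
  assumes "nice m f" "nice m g"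
  shows "rdy m (fadd f g) = fadd (rdy m f) (rdy m g)"
proof (intro ext)
  fix x D
  have "rdy m (fadd f g) x D = (\<Sum>j\<in>{2..m}. clmul m (pd j f x) (gen j) D + clmul m (pd j g x) (gen j) D)"
    unfolding rdy_eq using assms by (intro sum.cong refl) (simp add: pd_add fadd_def clmul_add_l)
  then show "rdy m (fadd f g) x D = fadd (rdy m f) (rdy m g) x D"
    by (simp add: rdy_eq fadd_def sum.distrib)
qed

lemma ldy_fadd:
  assumes "nice m f" "nice m g"
  shows "ldy m (fadd f g) = fadd (ldy m f) (ldy m g)"
proof (intro ext)
  fix x D
  have "ldy m (fadd f g) x D = (\<Sum>j\<in>{2..m}. clmul m (gen j) (pd j f x) D + clmul m (gen j) (pd j g x) D)"
    unfolding ldy_eq using assms by (intro sum.cong refl) (simp add: pd_add fadd_def clmul_add_r)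
  then show "ldy m (fadd f g) x D = fadd (ldy m f) (ldy m g) x D"
    by (simp add: ldy_eq fadd_def sum.distrib)
qed

lemma rdy_fsc:
  assumes "nice m f"
  shows "rdy m (fsc r f) = fsc r (rdy m f)"
proof (intro ext)
  fix x D
  have "rdy m (fsc r f) x D = (\<Sum>j\<in>{2..m}. r * clmul m (pd j f x) (gen j) D)"
    unfolding rdy_eq using assms by (intro sum.cong refl) (simp add: pd_scale fsc_def clmul_scale_l)
  then show "rdy m (fsc r f) x D = fsc r (rdy m f) x D"
    by (simp add: rdy_eq fsc_def sum_distrib_left)
qed

lemma ldy_fsc:
  assumes "nice m f"
  shows "ldy m (fsc r f) = fsc r (ldy m f)"
proof (intro ext)
  fix x D
  have "ldy m (fsc r f) x D = (\<Sum>j\<in>{2..m}. r * clmul m (gen j) (pd j f x) D)"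
    unfolding ldy_eq using assms by (intro sum.cong refl) (simp add: pd_scale fsc_def clmul_scale_r)
  then show "ldy m (fsc r f) x D = fsc r (ldy m f) x D"
    by (simp add: ldy_eq fsc_def sum_distrib_left)
qed

lemma Eop_fadd: "Eop m (fadd f g) = fadd (Eop m f) (Eop m g)"
  by (intro ext) (simp add: Eop_def fadd_def clmul_addf_r clmul_add_l)

lemma Eop_fsc: "Eop m (fsc r f) = fsc r (Eop m f)"
  by (intro ext) (simp add: Eop_def fsc_def clmul_scalef_r clmul_scale_l)

lemma Eop_Eop: "m \<ge> 1 \<Longrightarrow> nice m f \<Longrightarrow> Eop m (Eop m f) = f"
  by (intro ext) (simp only: Eop_def E_E nice_cv)

lemma rdy_Eop:
  assumes m: "m \<ge> 1" and f: "nice m f"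
  shows "rdy m (Eop m f) = fsc (-1) (Eop m (rdy m f))"
proof (intro ext)
  fix x D
  have "rdy m (Eop m f) x D = (\<Sum>k\<in>{2..m}. - clmul m (clmul m (gen 1) (clmul m (pd k f x) (gen k))) (gen 1) D)"
    unfolding rdy_eq
  proof (intro sum.cong refl)
    fix k assume k: "k \<in> {2..m}"
    show "clmul m (pd k (Eop m f) x) (gen k) D =
      - clmul m (clmul m (gen 1) (clmul m (pd k f x) (gen k))) (gen 1) D"
      using pd_Eop[OF f k] E_gen[OF m k] by (simp add: Eop_def)
  qed
  then show "rdy m (Eop m f) x D = fsc (-1) (Eop m (rdy m f)) x D"
    by (simp add: fsc_def Eop_def rdy_eq clmul_sumf_r clmul_sum_l sum_negf)
qed

lemma ldy_Eop:
  assumes m: "m \<ge> 1" and f: "nice m f"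
  shows "ldy m (Eop m f) = fsc (-1) (Eop m (ldy m f))"
proof (intro ext)
  fix x D
  have "ldy m (Eop m f) x D = (\<Sum>k\<in>{2..m}. - clmul m (clmul m (gen 1) (clmul m (gen k) (pd k f x))) (gen 1) D)"
    unfolding ldy_eq
  proof (intro sum.cong refl)
    fix k assume k: "k \<in> {2..m}"
    show "clmul m (gen k) (pd k (Eop m f) x) D =
      - clmul m (clmul m (gen 1) (clmul m (gen k) (pd k f x))) (gen 1) D"
      using pd_Eop[OF f k] gen_E[OF m k] by (simp add: Eop_def)
  qed
  then show "ldy m (Eop m f) x D = fsc (-1) (Eop m (ldy m f)) x D"
    by (simp add: fsc_def Eop_def ldy_eq clmul_sumf_r clmul_sum_l sum_negf)
qed

lemma pd_rdy:
  assumes f: "nice m f" and j: "j \<in> {2..m}"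
  shows "pd j (rdy m f) = (\<lambda>x C. \<Sum>k\<in>{2..m}. clmul m (pd j (pd k f) x) (gen k) C)"
proof -
  have "pd j (rdy m f) = (\<lambda>x C. \<Sum>k\<in>{2..m}. pd j (\<lambda>x. clmul m (pd k f x) (gen k)) x C)"
    unfolding rdy_eq using f j by (intro pd_sum) (auto intro!: nice_rmul nice_pd)
  also have "\<dots> = (\<lambda>x C. \<Sum>k\<in>{2..m}. clmul m (pd j (pd k f) x) (gen k) C)"
    using f j by (intro ext sum.cong refl) (simp add: pd_rmul nice_pd)
  finally show ?thesis .
qed

lemma pd_ldy:
  assumes f: "nice m f" and j: "j \<in> {2..m}"
  shows "pd j (ldy m f) = (\<lambda>x C. \<Sum>k\<in>{2..m}. clmul m (gen k) (pd j (pd k f) x) C)"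
proof -
  have "pd j (ldy m f) = (\<lambda>x C. \<Sum>k\<in>{2..m}. pd j (\<lambda>x. clmul m (gen k) (pd k f x)) x C)"
    unfolding ldy_eq using f j by (intro pd_sum) (auto intro!: nice_lmul nice_pd)
  also have "\<dots> = (\<lambda>x C. \<Sum>k\<in>{2..m}. clmul m (gen k) (pd j (pd k f) x) C)"
    using f j by (intro ext sum.cong refl) (simp add: pd_lmul nice_pd)
  finally show ?thesis .
qed

lemma ldy_rdy:
  assumes f: "nice m f"
  shows "ldy m (rdy m f) = rdy m (ldy m f)"
proof (intro ext)
  fix x D
  have "ldy m (rdy m f) x D = (\<Sum>j\<in>{2..m}. \<Sum>k\<in>{2..m}. clmul m (gen j) (clmul m (pd j (pd k f) x) (gen k)) D)"
    unfolding ldy_eq[of m "rdy m f"] by (intro sum.cong refl) (simp add: pd_rdy[OF f] clmul_sum_r)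
  also have "\<dots> = (\<Sum>k\<in>{2..m}. \<Sum>j\<in>{2..m}. clmul m (clmul m (gen j) (pd k (pd j f) x)) (gen k) D)"
    by (subst sum.swap) (intro sum.cong refl, simp add: clmul_assoc pd_comm[OF f])
  also have "\<dots> = rdy m (ldy m f) x D"
    unfolding rdy_eq[of m "ldy m f"] by (intro sum.cong refl) (simp add: pd_ldy[OF f] clmul_sum_l)
  finally show "ldy m (rdy m f) x D = rdy m (ldy m f) x D" .
qed

lemma sym_double_sum:
  fixes T :: "nat \<Rightarrow> nat \<Rightarrow> real"
  assumes "finite J" "\<And>k j. k \<in> J \<Longrightarrow> j \<in> J \<Longrightarrow> T k j + T j k = (if j = k then - 2 * d k else 0)"
  shows "(\<Sum>k\<in>J. \<Sum>j\<in>J. T k j) = - (\<Sum>k\<in>J. d k)"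
proof -
  have "2 * (\<Sum>k\<in>J. \<Sum>j\<in>J. T k j) = (\<Sum>k\<in>J. \<Sum>j\<in>J. T k j) + (\<Sum>k\<in>J. \<Sum>j\<in>J. T j k)"
    by (subst (2) sum.swap) simp
  also have "\<dots> = (\<Sum>k\<in>J. \<Sum>j\<in>J. T k j + T j k)" by (simp add: sum.distrib)
  also have "\<dots> = (\<Sum>k\<in>J. \<Sum>j\<in>J. if j = k then - 2 * d k else 0)"
    using assms(2) by (intro sum.cong refl) auto
  also have "\<dots> = - 2 * (\<Sum>k\<in>J. d k)" using assms(1) by (simp add: sum_distrib_left)
  finally show ?thesis by simp
qed

lemma rdy_rdy:
  assumes m: "m \<ge> 1" and f: "nice m f"
  shows "rdy m (rdy m f) = fsc (-1) (lap m f)"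
proof (intro ext)
  fix x D
  have "rdy m (rdy m f) x D = (\<Sum>k\<in>{2..m}. \<Sum>j\<in>{2..m}. clmul m (clmul m (pd k (pd j f) x) (gen j)) (gen k) D)"
    unfolding rdy_eq[of m "rdy m f"] by (intro sum.cong refl) (simp add: pd_rdy[OF f] clmul_sum_l)
  also have "\<dots> = - (\<Sum>k\<in>{2..m}. pd k (pd k f) x D)"
  proof (rule sym_double_sum)
    fix k j assume kj: "k \<in> {2..m}" "j \<in> {2..m}"
    have "pd j (pd k f) = pd k (pd j f)" using pd_comm[OF f kj(2,1)] .
    moreover have "cv m (pd k (pd j f) x)" using f kj by (intro nice_cv nice_pd)
    ultimately show "clmul m (clmul m (pd k (pd j f) x) (gen j)) (gen k) D +
       clmul m (clmul m (pd j (pd k f) x) (gen k)) (gen j) D = (if j = k then - 2 * pd k (pd k f) x D else 0)"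
      using sq_pair_r[of j m k "pd k (pd j f) x" D] kj by auto
  qed simp
  finally show "rdy m (rdy m f) x D = fsc (-1) (lap m f) x D" by (simp add: fsc_def lap_def)
qed

lemma ldy_ldy:
  assumes m: "m \<ge> 1" and f: "nice m f"
  shows "ldy m (ldy m f) = fsc (-1) (lap m f)"
proof (intro ext)
  fix x D
  have "ldy m (ldy m f) x D = (\<Sum>k\<in>{2..m}. \<Sum>j\<in>{2..m}. clmul m (gen k) (clmul m (gen j) (pd k (pd j f) x)) D)"
    unfolding ldy_eq[of m "ldy m f"] by (intro sum.cong refl) (simp add: pd_ldy[OF f] clmul_sum_r)
  also have "\<dots> = - (\<Sum>k\<in>{2..m}. pd k (pd k f) x D)"
  proof (rule sym_double_sum)
    fix k j assume kj: "k \<in> {2..m}" "j \<in> {2..m}"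
    have "pd j (pd k f) = pd k (pd j f)" using pd_comm[OF f kj(2,1)] .
    moreover have "cv m (pd k (pd j f) x)" using f kj by (intro nice_cv nice_pd)
    ultimately show "clmul m (gen k) (clmul m (gen j) (pd k (pd j f) x)) D +
       clmul m (gen j) (clmul m (gen k) (pd j (pd k f) x)) D = (if j = k then - 2 * pd k (pd k f) x D else 0)"
      using sq_pair_l[of j m k "pd k (pd j f) x" D] kj by auto
  qed simp
  finally show "ldy m (ldy m f) x D = fsc (-1) (lap m f) x D" by (simp add: fsc_def lap_def)
qed


lemmas nice_simps = nice_fadd nice_fsc nice_Eop nice_rdy nice_ldy

lemma fsc_fsc: "fsc r (fsc s g) = fsc (r * s) g"
  by (simp add: fsc_def mult.assoc)

lemma fsc_one: "fsc 1 g = g"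
  by (simp add: fsc_def)

lemma ldy_Utilde:
  assumes m: "m \<ge> 2" and f: "nice m f"
  shows "ldy m (Utilde m f) = Vop m (ldy m f)"
  using m f by (simp add: Utilde_eq Vop_def ldy_fadd nice_simps ldy_Eop ldy_rdy)

lemma ldy_Vop:
  assumes m: "m \<ge> 2" and f: "nice m f"
  shows "ldy m (Vop m f) = Utilde m (ldy m f)"
  using m f by (simp add: Utilde_eq Vop_def ldy_fadd ldy_fsc nice_simps ldy_Eop ldy_rdy fsc_fsc fsc_one)

lemma Wop_Utilde:
  assumes m: "m \<ge> 2" and f: "nice m f"
  shows "Wop m (Utilde m f) = fsc (-1) (rdy m (rdy m f))"
proof -
  have m1: "m \<ge> 1" using m by simp
  have "Wop m (Utilde m f) = fadd (fadd (fadd (fadd f (Eop m f)) (rdy m f))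
      (fsc (-1) (fadd (fadd (Eop m f) f) (Eop m (rdy m f)))))
      (fsc (-1) (fadd (fadd (rdy m f) (fsc (-1) (Eop m (rdy m f)))) (rdy m (rdy m f))))"
    using m1 f by (simp add: Wop_def Utilde_eq Eop_fadd Eop_Eop rdy_fadd rdy_Eop nice_simps)
  also have "\<dots> = fsc (-1) (rdy m (rdy m f))"
    by (intro ext) (simp add: fadd_def fsc_def)
  finally show ?thesis .
qed

lemma rdy2_Utilde:
  assumes m: "m \<ge> 2" and f: "nice m f"
  shows "rdy m (rdy m (Utilde m f)) = Utilde m (rdy m (rdy m f))"
proof -
  have m1: "m \<ge> 1" using m by simp
  show ?thesis
    using m1 f by (simp add: Utilde_eq rdy_fadd rdy_fsc rdy_Eop nice_simps fsc_fsc fsc_one)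
qed

lemma spd_zero: "spd j (\<lambda>x. 0) = (\<lambda>x. 0)"
  by (intro ext) (simp add: spd_def DERIV_imp_deriv[OF DERIV_const])

lemma pd_zero: "pd j (\<lambda>x C. 0) = (\<lambda>x C. 0)"
  by (intro ext) (simp add: pd_def DERIV_imp_deriv[OF DERIV_const])

lemma rdy_zero: "rdy m (\<lambda>x C. 0) = (\<lambda>x C. 0)"
  by (simp add: rdy_eq pd_zero clmul_zero_l)

lemma ldy_zero: "ldy m (\<lambda>x C. 0) = (\<lambda>x C. 0)"
  by (simp add: ldy_eq pd_zero clmul_zero_r)

lemma Wop_zero: "Wop m (\<lambda>x C. 0) = (\<lambda>x C. 0)"
  by (simp add: Wop_def Eop_def fadd_def fsc_def rdy_zero clmul_zerof_r clmul_zero_l)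

lemma ldy_pow_zero: "(ldy m ^^ k) (\<lambda>x C. 0) = (\<lambda>x C. 0)"
  by (induction k) (simp_all add: ldy_zero)

lemma nice_pow:
  assumes "\<And>g. nice m g \<Longrightarrow> nice m (T g)" "nice m f"
  shows "nice m ((T ^^ k) f)"
  by (induction k) (simp_all add: assms)

lemma ldy_pow_Utilde:
  assumes m: "m \<ge> 2"
  shows "nice m f \<Longrightarrow> (ldy m ^^ k) (Utilde m f) = (if even k then Utilde m else Vop m) ((ldy m ^^ k) f) \<and>
     (ldy m ^^ k) (Vop m f) = (if even k then Vop m else Utilde m) ((ldy m ^^ k) f)"
proof (induction k)
  case 0 then show ?case by simp
next
  case (Suc k)
  have n: "nice m ((ldy m ^^ k) f)" by (rule nice_pow[OF nice_ldy Suc.prems])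
  show ?case
  proof (cases "even k")
    case True
    then show ?thesis using Suc.IH[OF Suc.prems] n ldy_Utilde[OF m n] ldy_Vop[OF m n] by simp
  next
    case False
    then show ?thesis using Suc.IH[OF Suc.prems] n ldy_Utilde[OF m n] ldy_Vop[OF m n] by simp
  qed
qed

lemma Vop_pow_ldy_odd:
  assumes m: "m \<ge> 2" and f: "nice m f" and k: "odd k"
  shows "(Vop m ^^ N) ((ldy m ^^ k) f) = (ldy m ^^ k) ((Utilde m ^^ N) f)"
proof (induction N)
  case 0 then show ?case by simp
next
  case (Suc N)
  have n: "nice m ((Utilde m ^^ N) f)" by (rule nice_pow[OF nice_Utilde f])
  have "(Vop m ^^ Suc N) ((ldy m ^^ k) f) = Vop m ((ldy m ^^ k) ((Utilde m ^^ N) f))"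
    using Suc.IH by simp
  also have "\<dots> = (ldy m ^^ k) (Utilde m ((Utilde m ^^ N) f))"
    using ldy_pow_Utilde[OF m n, of k] k by simp
  finally show ?case by simp
qed

lemma rdy2_pow_Utilde:
  assumes m: "m \<ge> 2" and f: "nice m f"
  shows "(rdy m ^^ (2 * k)) (Utilde m f) = Utilde m ((rdy m ^^ (2 * k)) f)"
proof (induction k)
  case 0 then show ?case by simp
next
  case (Suc k)
  have n: "nice m ((rdy m ^^ (2 * k)) f)" by (rule nice_pow[OF nice_rdy f])
  have e: "2 * Suc k = Suc (Suc (2 * k))" by simp
  show ?case unfolding e using Suc.IH rdy2_Utilde[OF m n] by simp
qed

lemma Utilde_pow_zero:
  assumes m: "m \<ge> 2"
  shows "nice m f \<Longrightarrow> (Utilde m ^^ k) f = (\<lambda>x C. 0) \<Longrightarrow> (rdy m ^^ (2 * k)) f = (\<lambda>x C. 0)"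
proof (induction k arbitrary: f)
  case 0 then show ?case by simp
next
  case (Suc k)
  have nU: "nice m (Utilde m f)" by (rule nice_Utilde[OF Suc.prems(1)])
  have "(Utilde m ^^ k) (Utilde m f) = (\<lambda>x C. 0)"
    using Suc.prems(2) by (simp add: funpow_Suc_right del: funpow.simps)
  then have "(rdy m ^^ (2 * k)) (Utilde m f) = (\<lambda>x C. 0)" by (rule Suc.IH[OF nU])
  then have U0: "Utilde m ((rdy m ^^ (2 * k)) f) = (\<lambda>x C. 0)"
    using rdy2_pow_Utilde[OF m Suc.prems(1)] by simp
  define g where "g = (rdy m ^^ (2 * k)) f"
  have ng: "nice m g" unfolding g_def by (rule nice_pow[OF nice_rdy Suc.prems(1)])
  have "fsc (-1) (rdy m (rdy m g)) = (\<lambda>x C. 0)"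
    using Wop_Utilde[OF m ng] U0 Wop_zero unfolding g_def by simp
  then have "rdy m (rdy m g) = (\<lambda>x C. 0)"
    by (metis fsc_fsc fsc_one mult_minus1 neg_equal_iff_equal fsc_def mult_zero_right)
  moreover have "2 * Suc k = Suc (Suc (2 * k))" by simp
  ultimately show ?case unfolding g_def by simp
qed

lemma rdy_ldy_pow:
  assumes m: "m \<ge> 2" and f: "nice m f"
  shows "(rdy m ^^ (2 * k)) f = (ldy m ^^ (2 * k)) f"
proof (induction k)
  case 0 then show ?case by simp
next
  case (Suc k)
  have n: "nice m ((ldy m ^^ (2 * k)) f)" by (rule nice_pow[OF nice_ldy f])
  have e: "2 * Suc k = Suc (Suc (2 * k))" by simp
  have m1: "m \<ge> 1" using m by simp
  show ?case unfolding e using Suc.IH rdy_rdy[OF m1 n] ldy_ldy[OF m1 n] by simp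
qed


declare One_nat_def [simp del]

definition ec :: "(nat \<Rightarrow> real) \<Rightarrow> real" where "ec x = exp (x 0) * cos (x 1)"
definition es :: "(nat \<Rightarrow> real) \<Rightarrow> real" where "es x = exp (x 0) * sin (x 1)"

definition ep :: "nat \<Rightarrow> (nat \<Rightarrow> real) \<Rightarrow> clif \<Rightarrow> clif \<Rightarrow> clif" where
  "ep m x a b = cladd (clmul m (cexpz x) a) (clmul m (cexpzbar x) b)"

definition EP :: "nat \<Rightarrow> ((nat \<Rightarrow> real) \<Rightarrow> clif) \<Rightarrow> ((nat \<Rightarrow> real) \<Rightarrow> clif) \<Rightarrow> (nat \<Rightarrow> real) \<Rightarrow> clif" where
  "EP m H K = (\<lambda>x. ep m x (H x) (K x))"

lemma cexpz_eq: "cexpz x = (\<lambda>C. ec x * one C + es x * gen 1 C)"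
  by (intro ext) (simp add: cexpz_def ec_def es_def one_def gen_def)

lemma cexpzbar_eq: "cexpzbar x = (\<lambda>C. ec x * one C - es x * gen 1 C)"
  by (intro ext) (simp add: cexpzbar_def ec_def es_def one_def gen_def)

lemma clmul_cexpz: "cv m a \<Longrightarrow> clmul m (cexpz x) a D = ec x * a D + es x * clmul m (gen 1) a D"
  by (simp add: cexpz_eq clmul_add_l clmul_scale_l clmul_one_l)

lemma clmul_cexpzbar: "cv m a \<Longrightarrow> clmul m (cexpzbar x) a D = ec x * a D - es x * clmul m (gen 1) a D"
  by (simp add: cexpzbar_eq clmul_diff_l clmul_scale_l clmul_one_l)

lemma ep_ecs: "cv m a \<Longrightarrow> cv m b \<Longrightarrow>
   ep m x a b D = ec x * (a D + b D) + es x * (clmul m (gen 1) a D - clmul m (gen 1) b D)"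
  by (simp add: ep_def cladd_def clmul_cexpz clmul_cexpzbar algebra_simps)

lemma ep_add: "ep m x (\<lambda>C. a C + a' C) (\<lambda>C. b C + b' C) D = ep m x a b D + ep m x a' b' D"
  by (simp add: ep_def cladd_def clmul_add_r)

lemma ep_scale: "ep m x (\<lambda>C. r * a C) (\<lambda>C. r * b C) D = r * ep m x a b D"
  by (simp add: ep_def cladd_def clmul_scale_r algebra_simps)

lemma ep_sum: "ep m x (\<lambda>C. \<Sum>i\<in>I. a i C) (\<lambda>C. \<Sum>i\<in>I. b i C) D = (\<Sum>i\<in>I. ep m x (a i) (b i) D)"
  by (simp add: ep_def cladd_def clmul_sum_r sum.distrib)

lemma ep_zero: "ep m x (\<lambda>C. 0) (\<lambda>C. 0) = clzero"
  by (intro ext) (simp add: ep_def cladd_def clmul_zero_r clzero_def)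

lemma ep_rmul: "clmul m (ep m x a b) u = ep m x (clmul m a u) (clmul m b u)"
  by (simp add: ep_def cladd_def clmul_addf_l clmul_assoc)

lemma e1_cexpz: "m \<ge> 1 \<Longrightarrow> clmul m (gen 1) (cexpz x) = clmul m (cexpz x) (gen 1)"
  by (intro ext) (simp add: cexpz_eq clmul_add_l clmul_add_r clmul_scale_l clmul_scale_r
      clmul_one_l clmul_one_r gen_cv)

lemma e1_cexpzbar: "m \<ge> 1 \<Longrightarrow> clmul m (gen 1) (cexpzbar x) = clmul m (cexpzbar x) (gen 1)"
  by (intro ext) (simp add: cexpzbar_eq clmul_diff_l clmul_diff_r clmul_scale_l clmul_scale_r
      clmul_one_l clmul_one_r gen_cv)

lemma ej_cexpz: "j \<in> {2..m} \<Longrightarrow> clmul m (gen j) (cexpz x) = clmul m (cexpzbar x) (gen j)"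
proof (intro ext)
  fix D assume j: "j \<in> {2..m}"
  have g: "j \<in> {1..m}" "1 \<in> {1..m}" "j \<noteq> 1" using j by auto
  show "clmul m (gen j) (cexpz x) D = clmul m (cexpzbar x) (gen j) D"
    using gen_anti[OF g] by (simp add: cexpz_eq cexpzbar_eq clmul_add_r clmul_diff_l clmul_scale_r
      clmul_scale_l clmul_one_l[OF gen_cv[OF g(1)]] clmul_one_r[OF gen_cv[OF g(1)]] g)
qed

lemma ej_cexpzbar: "j \<in> {2..m} \<Longrightarrow> clmul m (gen j) (cexpzbar x) = clmul m (cexpz x) (gen j)"
proof (intro ext)
  fix D assume j: "j \<in> {2..m}"
  have g: "j \<in> {1..m}" "1 \<in> {1..m}" "j \<noteq> 1" using j by auto
  show "clmul m (gen j) (cexpzbar x) D = clmul m (cexpz x) (gen j) D"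
    using gen_anti[OF g] by (simp add: cexpz_eq cexpzbar_eq clmul_diff_r clmul_add_l clmul_scale_r
      clmul_scale_l clmul_one_l[OF gen_cv[OF g(1)]] clmul_one_r[OF gen_cv[OF g(1)]] g)
qed

lemma ep_e1: "m \<ge> 1 \<Longrightarrow> clmul m (gen 1) (ep m x a b) = ep m x (clmul m (gen 1) a) (clmul m (gen 1) b)"
  by (simp add: ep_def cladd_def clmul_addf_r clmul_assoc[symmetric] e1_cexpz e1_cexpzbar)

lemma ep_ej: "j \<in> {2..m} \<Longrightarrow> clmul m (gen j) (ep m x a b) = ep m x (clmul m (gen j) b) (clmul m (gen j) a)"
  by (simp add: ep_def cladd_def clmul_addf_r clmul_assoc[symmetric] ej_cexpz ej_cexpzbar)
     (simp add: clmul_assoc add.commute)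


lemma nice_diff: "nice m f \<Longrightarrow> nice m g \<Longrightarrow> nice m (\<lambda>x C. f x C - g x C)"
  using nice_add[of m f "\<lambda>x C. (-1) * g x C"] nice_scale[of m g "-1"] by simp

lemma EP_ecs: "nice m H \<Longrightarrow> nice m K \<Longrightarrow> EP m H K =
   (\<lambda>x C. ec x * (H x C + K x C) + es x * (clmul m (gen 1) (H x) C - clmul m (gen 1) (K x) C))"
  by (intro ext) (simp add: EP_def ep_ecs nice_cv)

lemma upd0_dep: "nice m G \<Longrightarrow> G (x(0 := t)) = G x"
  by (rule nice_dep) auto

lemma upd1_dep: "nice m G \<Longrightarrow> G (x(1 := t)) = G x"
  by (rule nice_dep) auto

lemma pd0_ecs:
  assumes "nice m G1" "nice m G2"
  shows "pd 0 (\<lambda>x C. ec x * G1 x C + es x * G2 x C) = (\<lambda>x C. ec x * G1 x C + es x * G2 x C)"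
proof (intro ext)
  fix x C
  have e: "(\<lambda>t. ec (x(0 := t)) * G1 (x(0 := t)) C + es (x(0 := t)) * G2 (x(0 := t)) C) =
      (\<lambda>t. exp t * (cos (x 1) * G1 x C + sin (x 1) * G2 x C))"
    using upd0_dep[OF assms(1)] upd0_dep[OF assms(2)] by (simp add: ec_def es_def algebra_simps)
  have "((\<lambda>t. exp t * (cos (x 1) * G1 x C + sin (x 1) * G2 x C)) has_real_derivative
      exp (x 0) * (cos (x 1) * G1 x C + sin (x 1) * G2 x C)) (at (x 0))"
    by (auto intro!: derivative_eq_intros)
  then show "pd 0 (\<lambda>x C. ec x * G1 x C + es x * G2 x C) x C = ec x * G1 x C + es x * G2 x C"
    unfolding pd_def e by (simp add: DERIV_imp_deriv ec_def es_def algebra_simps)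
qed

lemma pd1_ecs:
  assumes "nice m G1" "nice m G2"
  shows "pd 1 (\<lambda>x C. ec x * G1 x C + es x * G2 x C) = (\<lambda>x C. ec x * G2 x C - es x * G1 x C)"
proof (intro ext)
  fix x C
  have e: "(\<lambda>t. ec (x(1 := t)) * G1 (x(1 := t)) C + es (x(1 := t)) * G2 (x(1 := t)) C) =
      (\<lambda>t. exp (x 0) * (cos t * G1 x C + sin t * G2 x C))"
    using upd1_dep[OF assms(1)] upd1_dep[OF assms(2)] by (simp add: ec_def es_def algebra_simps)
  have "((\<lambda>t. exp (x 0) * (cos t * G1 x C + sin t * G2 x C)) has_real_derivative
      exp (x 0) * (- sin (x 1) * G1 x C + cos (x 1) * G2 x C)) (at (x 1))"
    by (auto intro!: derivative_eq_intros)
  then show "pd 1 (\<lambda>x C. ec x * G1 x C + es x * G2 x C) x C = ec x * G2 x C - es x * G1 x C"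
    unfolding pd_def e by (simp add: DERIV_imp_deriv ec_def es_def algebra_simps)
qed

lemma pdj_ecs:
  assumes "nice m G1" "nice m G2" "j \<in> {2..m}"
  shows "pd j (\<lambda>x C. ec x * G1 x C + es x * G2 x C) = (\<lambda>x C. ec x * pd j G1 x C + es x * pd j G2 x C)"
proof (intro ext)
  fix x C
  have j01: "j \<noteq> 0" "j \<noteq> 1" using assms(3) by auto
  have e: "(\<lambda>t. ec (x(j := t)) * G1 (x(j := t)) C + es (x(j := t)) * G2 (x(j := t)) C) =
      (\<lambda>t. ec x * G1 (x(j := t)) C + es x * G2 (x(j := t)) C)"
    using j01 by (simp add: ec_def es_def)
  have "((\<lambda>t. ec x * G1 (x(j := t)) C + es x * G2 (x(j := t)) C) has_real_derivative
      ec x * spd j (\<lambda>y. G1 y C) x + es x * spd j (\<lambda>y. G2 y C) x) (at (x j))"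
    by (intro DERIV_add DERIV_cmult dirdiff_DERIV'[OF nice_dirdiff[OF assms(1) assms(3)]]
        dirdiff_DERIV'[OF nice_dirdiff[OF assms(2) assms(3)]])
  then show "pd j (\<lambda>x C. ec x * G1 x C + es x * G2 x C) x C = ec x * pd j G1 x C + es x * pd j G2 x C"
    unfolding pd_def e by (simp add: DERIV_imp_deriv spd_def)
qed

lemma nice_G2: "nice m H \<Longrightarrow> nice m K \<Longrightarrow> nice m (\<lambda>x C. clmul m (gen 1) (H x) C - clmul m (gen 1) (K x) C)"
  by (intro nice_diff nice_lmul)

lemma pd0_EP: "nice m H \<Longrightarrow> nice m K \<Longrightarrow> pd 0 (EP m H K) = EP m H K"
  unfolding EP_ecs by (rule pd0_ecs[OF nice_add nice_G2])

lemma pd1_EP: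
  assumes m: "m \<ge> 1" and H: "nice m H" and K: "nice m K"
  shows "pd 1 (EP m H K) = EP m (\<lambda>x. clmul m (gen 1) (H x)) (\<lambda>x C. - clmul m (gen 1) (K x) C)"
proof -
  have nK': "nice m (\<lambda>x C. - clmul m (gen 1) (K x) C)"
    using nice_scale[OF nice_lmul[OF K], of "-1" "gen 1"] by simp
  have g: "1 \<in> {1..m}" using m by simp
  have "pd 1 (EP m H K) = (\<lambda>x C. ec x * (clmul m (gen 1) (H x) C - clmul m (gen 1) (K x) C) - es x * (H x C + K x C))"
    unfolding EP_ecs[OF H K] by (rule pd1_ecs[OF nice_add[OF H K] nice_G2[OF H K]])
  also have "\<dots> = EP m (\<lambda>x. clmul m (gen 1) (H x)) (\<lambda>x C. - clmul m (gen 1) (K x) C)"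
    unfolding EP_ecs[OF nice_lmul[OF H] nK']
    using H K by (simp add: clmul_negf_r clmul_neg_r gen_sq2[OF g] nice_cv algebra_simps)
  finally show ?thesis .
qed

lemma pdj_EP:
  assumes H: "nice m H" and K: "nice m K" and j: "j \<in> {2..m}"
  shows "pd j (EP m H K) = EP m (pd j H) (pd j K)"
  unfolding EP_ecs[OF H K] EP_ecs[OF nice_pd[OF H j] nice_pd[OF K j]]
    pdj_ecs[OF nice_add[OF H K] nice_G2[OF H K] j]
  using H K j by (simp add: pd_add pd_diff[OF nice_lmul[OF H] nice_lmul[OF K] j] pd_lmul[OF H j] pd_lmul[OF K j])


lemma set_1m: "(m::nat) \<ge> 1 \<Longrightarrow> {1..m} = insert 1 {2..m}"
  by auto

lemma rdirac_EP:
  assumes m: "m \<ge> 2" and H: "nice m H" and K: "nice m K"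
  shows "rdirac m (EP m H K) = EP m (Utilde m H) (Vop m K)"
proof (intro ext)
  fix x D
  have m1: "m \<ge> 1" using m by simp
  have "rdirac m (EP m H K) x D = ep m x (H x) (K x) D +
     clmul m (ep m x (clmul m (gen 1) (H x)) (\<lambda>C. - clmul m (gen 1) (K x) C)) (gen 1) D +
     (\<Sum>j\<in>{2..m}. clmul m (ep m x (pd j H x) (pd j K x)) (gen j) D)"
  proof -
    have s: "(\<Sum>j\<in>{2..m}. clmul m (pd j (EP m H K) x) (gen j) D) = (\<Sum>j\<in>{2..m}. clmul m (ep m x (pd j H x) (pd j K x)) (gen j) D)"
    proof (intro sum.cong refl)
      fix j assume j: "j \<in> {2..m}"
      show "clmul m (pd j (EP m H K) x) (gen j) D = clmul m (ep m x (pd j H x) (pd j K x)) (gen j) D"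
        unfolding pdj_EP[OF H K j] by (simp add: EP_def)
    qed
    show ?thesis
      unfolding rdirac_def set_1m[OF m1]
      by (simp add: pd0_EP[OF H K] pd1_EP[OF m1 H K] s) (simp add: EP_def)
  qed
  also have "\<dots> = ep m x (H x) (K x) D +
     ep m x (Eop m H x) (\<lambda>C. -1 * Eop m K x C) D +
     (\<Sum>j\<in>{2..m}. ep m x (clmul m (pd j H x) (gen j)) (clmul m (pd j K x) (gen j)) D)"
    by (simp add: ep_rmul Eop_def clmul_negf_l)
  also have "\<dots> = ep m x (Utilde m H x) (Vop m K x) D"
    by (simp only: Utilde_eq Vop_def fadd_def fsc_def ep_add rdy_def ep_sum)
  finally show "rdirac m (EP m H K) x D = EP m (Utilde m H) (Vop m K) x D"
    by (simp add: EP_def)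
qed

lemma ldirac_EP:
  assumes m: "m \<ge> 2" and H: "nice m H" and K: "nice m K"
  shows "ldirac m (EP m H K) = EP m (ldy m K) (fadd (ldy m H) (fsc 2 K))"
proof (intro ext)
  fix x D
  have m1: "m \<ge> 1" using m by simp
  have g: "1 \<in> {1..m}" using m by simp
  have "ldirac m (EP m H K) x D = ep m x (H x) (K x) D +
     clmul m (gen 1) (ep m x (clmul m (gen 1) (H x)) (\<lambda>C. - clmul m (gen 1) (K x) C)) D +
     (\<Sum>j\<in>{2..m}. clmul m (gen j) (ep m x (pd j H x) (pd j K x)) D)"
  proof -
    have s: "(\<Sum>j\<in>{2..m}. clmul m (gen j) (pd j (EP m H K) x) D) = (\<Sum>j\<in>{2..m}. clmul m (gen j) (ep m x (pd j H x) (pd j K x)) D)"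
    proof (intro sum.cong refl)
      fix j assume j: "j \<in> {2..m}"
      show "clmul m (gen j) (pd j (EP m H K) x) D = clmul m (gen j) (ep m x (pd j H x) (pd j K x)) D"
        unfolding pdj_EP[OF H K j] by (simp add: EP_def)
    qed
    show ?thesis
      unfolding ldirac_def set_1m[OF m1]
      by (simp add: pd0_EP[OF H K] pd1_EP[OF m1 H K] s) (simp add: EP_def)
  qed
  also have "\<dots> = ep m x (H x) (K x) D + ep m x (\<lambda>C. -1 * H x C) (K x) D +
     (\<Sum>j\<in>{2..m}. ep m x (clmul m (gen j) (pd j K x)) (clmul m (gen j) (pd j H x)) D)"
    using H K by (simp add: ep_e1[OF m1] ep_ej clmul_negf_r gen_sq2[OF g] nice_cv)
  also have "\<dots> = ep m x (\<lambda>C. (H x C + -1 * H x C) + (\<Sum>j\<in>{2..m}. clmul m (gen j) (pd j K x) C))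
                          (\<lambda>C. (K x C + K x C) + (\<Sum>j\<in>{2..m}. clmul m (gen j) (pd j H x) C)) D"
    by (simp only: ep_add ep_sum)
  also have "\<dots> = ep m x (ldy m K x) (fadd (ldy m H) (fsc 2 K) x) D"
    by (simp add: ldy_def fadd_def fsc_def add.commute)
  finally show "ldirac m (EP m H K) x D = EP m (ldy m K) (fadd (ldy m H) (fsc 2 K)) x D"
    by (simp add: EP_def)
qed


declare One_nat_def [simp]


fun aa :: "nat \<Rightarrow> real fps" where
  "aa 0 = 0"
| "aa (Suc 0) = 1"
| "aa (Suc (Suc n)) = 2 * aa (Suc n) + fps_X * aa n"

lemma aa_eig:
  assumes g: "1 + 2 * g = fps_X * g ^ 2"
  shows "aa N + aa (Suc N) * g = (fps_X * g) ^ N * g"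
proof (induction N rule: less_induct)
  case (less N)
  show ?case
  proof (cases N)
    case 0 then show ?thesis by simp
  next
    case (Suc n)
    show ?thesis
    proof (cases n)
      case 0
      then show ?thesis using Suc g by (simp add: power2_eq_square algebra_simps)
    next
      case (Suc k)
      have IH1: "aa (Suc k) + aa (Suc (Suc k)) * g = (fps_X * g) ^ (Suc k) * g"
        using less.IH[of "Suc k"] \<open>N = Suc n\<close> Suc by simp
      have IH0: "aa k + aa (Suc k) * g = (fps_X * g) ^ k * g"
        using less.IH[of k] \<open>N = Suc n\<close> Suc by simp
      have h2: "(fps_X * g) ^ 2 = fps_X + 2 * (fps_X * g)"
      proof -
        have "(fps_X * g) ^ 2 = fps_X * (fps_X * g ^ 2)" by (simp add: power2_eq_square algebra_simps)
        also have "\<dots> = fps_X * (1 + 2 * g)" using g by simp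
        finally show ?thesis by (simp add: algebra_simps)
      qed
      have "aa N + aa (Suc N) * g = 2 * (aa (Suc k) + aa (Suc (Suc k)) * g) + fps_X * (aa k + aa (Suc k) * g)"
        using \<open>N = Suc n\<close> Suc by (simp add: algebra_simps)
      also have "\<dots> = (fps_X * g) ^ k * g * (2 * (fps_X * g) + fps_X)"
        unfolding IH1 IH0 by (simp add: algebra_simps)
      also have "\<dots> = (fps_X * g) ^ k * g * (fps_X * g) ^ 2" using h2 by (simp add: algebra_simps)
      also have "\<dots> = (fps_X * g) ^ N * g" using \<open>N = Suc n\<close> Suc by (simp add: algebra_simps power2_eq_square)
      finally show ?thesis .
    qed
  qed
qed

lemma eig_coeff_zero: "i < N \<Longrightarrow> fps_nth ((fps_X * g) ^ N * g) i = (0::real)"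
  by (simp add: power_mult_distrib mult.assoc fps_X_power_mult_nth)

lemma aa_nth0: "fps_nth (aa (Suc N)) 0 = 2 ^ N"
proof (induction N rule: less_induct)
  case (less N)
  show ?case
  proof (cases N)
    case 0 then show ?thesis by simp
  next
    case (Suc n) then show ?thesis using less.IH[of n] by simp
  qed
qed

definition bb :: "nat \<Rightarrow> real fps" where
  "bb N = (\<Sum>j\<le>N. fps_const (real (N choose (2 * j + 1))) * (1 + fps_X) ^ j)"

lemma choose_id:
  "(Suc (Suc N) choose (2 * j + 1)) + (N choose (2 * j + 1)) =
     2 * (Suc N choose (2 * j + 1)) + (if j = 0 then 0 else N choose (2 * j - 1))"
proof (cases j)
  case 0 then show ?thesis by simp
next
  case (Suc i)
  have a: "Suc (Suc N) choose (2 * j + 1) = (Suc N choose (2 * j)) + (Suc N choose (2 * j + 1))" by simp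
  have b: "Suc N choose (2 * j + 1) = (N choose (2 * j)) + (N choose (2 * j + 1))" by simp
  have c: "Suc N choose (2 * j) = (N choose (2 * j - 1)) + (N choose (2 * j))"
    using Suc by (simp add: numeral_2_eq_2)
  show ?thesis using a b c Suc by simp
qed

lemma sum_extend:
  assumes "N \<le> M" "\<And>j. N < j \<Longrightarrow> j \<le> M \<Longrightarrow> f j = 0"
  shows "(\<Sum>j\<le>(N::nat). f j) = (\<Sum>j\<le>M. (f j :: 'a :: comm_monoid_add))"
  by (rule sum.mono_neutral_left) (use assms in auto)

lemma bb_ext: "N \<le> M \<Longrightarrow> bb N = (\<Sum>j\<le>M. fps_const (real (N choose (2 * j + 1))) * (1 + fps_X) ^ j)"
  unfolding bb_def by (rule sum_extend) auto

lemma Lsum_add: "(\<Sum>j\<le>M. fps_const (a j) * Y ^ j) + (\<Sum>j\<le>M. fps_const (b j) * Y ^ j) =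
    (\<Sum>j\<le>M. fps_const (a j + b j) * (Y::real fps) ^ j)"
  by (simp add: sum.distrib[symmetric] distrib_right flip: fps_const_add)

lemma Lsum_sub: "(\<Sum>j\<le>M. fps_const (a j) * Y ^ j) - (\<Sum>j\<le>M. fps_const (b j) * Y ^ j) =
    (\<Sum>j\<le>M. fps_const (a j - b j) * (Y::real fps) ^ j)"
  by (simp add: sum_subtractf[symmetric] left_diff_distrib flip: fps_const_sub)

lemma Lsum_2: "2 * (\<Sum>j\<le>M. fps_const (a j) * Y ^ j) = (\<Sum>j\<le>M. fps_const (2 * a j) * (Y::real fps) ^ j)"
proof -
  have c2: "fps_const (2 * c) = 2 * (fps_const c :: real fps)" for c by (simp add: fps_numeral_fps_const)
  show ?thesis by (simp add: c2 sum_distrib_left mult.assoc)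
qed

lemma bb_rec: "bb (Suc (Suc N)) = 2 * bb (Suc N) + fps_X * bb N"
proof -
  let ?Y = "1 + fps_X :: real fps"
  let ?M = "Suc (Suc N)"
  have sh: "?Y * bb N = (\<Sum>j\<le>?M. fps_const (real (if j = 0 then 0 else N choose (2 * j - 1))) * ?Y ^ j)"
  proof -
    have "?Y * bb N = (\<Sum>j\<le>Suc N. fps_const (real (N choose (2 * j + 1))) * ?Y ^ Suc j)"
      unfolding bb_ext[of N "Suc N", OF le_SucI[OF order_refl]] sum_distrib_left
      by (intro sum.cong refl) (simp only: power_Suc mult_ac)
    also have "\<dots> = (\<Sum>j\<le>Suc N. fps_const (real (if Suc j = 0 then 0 else N choose (2 * Suc j - 1))) * ?Y ^ Suc j)"
      by simp
    also have "\<dots> = (\<Sum>j\<le>?M. fps_const (real (if j = 0 then 0 else N choose (2 * j - 1))) * ?Y ^ j)"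
      by (subst sum.atMost_Suc_shift[of _ "Suc N"]) simp
    finally show ?thesis .
  qed
  have "2 * bb (Suc N) + fps_X * bb N = 2 * bb (Suc N) + ?Y * bb N - bb N"
    by (simp add: algebra_simps)
  also have "\<dots> = (\<Sum>j\<le>?M. fps_const (2 * real (Suc N choose (2 * j + 1)) +
        real (if j = 0 then 0 else N choose (2 * j - 1)) - real (N choose (2 * j + 1))) * ?Y ^ j)"
    unfolding sh unfolding bb_ext[of "Suc N" ?M, OF le_SucI[OF order_refl]] bb_ext[of N ?M, OF le_SucI[OF le_SucI[OF order_refl]]]
    unfolding Lsum_2 Lsum_add Lsum_sub by (rule refl)
  also have "\<dots> = bb ?M"
    unfolding bb_def
  proof (intro sum.cong refl)
    fix j
    have "real (Suc (Suc N) choose (2 * j + 1)) = 2 * real (Suc N choose (2 * j + 1)) +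
        real (if j = 0 then 0 else N choose (2 * j - 1)) - real (N choose (2 * j + 1))"
      using arg_cong[OF choose_id[of N j], of real] by (simp add: of_nat_add)
    then show "fps_const (2 * real (Suc N choose (2 * j + 1)) +
        real (if j = 0 then 0 else N choose (2 * j - 1)) - real (N choose (2 * j + 1))) * ?Y ^ j =
        fps_const (real (?M choose (2 * j + 1))) * ?Y ^ j" by simp
  qed
  finally show ?thesis by simp
qed

lemma aa_bb: "aa N = bb N"
proof (induction N rule: less_induct)
  case (less N)
  show ?case
  proof (cases N)
    case 0 then show ?thesis by (simp add: bb_def)
  next
    case (Suc n)
    show ?thesis
    proof (cases n)
      case 0
      have "bb 1 = 1"
        unfolding bb_def by (simp add: numeral_2_eq_2)
      then show ?thesis using Suc 0 by simp
    next
      case (Suc k)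
      then show ?thesis using less.IH[of k] less.IH[of "Suc k"] \<open>N = Suc n\<close> by (simp add: bb_rec)
    qed
  qed
qed

lemma aa_nth: "fps_nth (aa N) i = (\<Sum>j\<le>N. real (N choose (2 * j + 1)) * real (j choose i))"
proof -
  have "fps_nth ((1 + fps_X :: real fps) ^ j) i = real (j choose i)" for j
    by (simp only: fps_binomial_of_nat[symmetric] fps_binomial_nth binomial_gbinomial)
  then show ?thesis unfolding aa_bb bb_def by (simp add: fps_sum_nth)
qed


declare cstd.simps [simp del]

fun cs :: "nat \<Rightarrow> real" where
  "cs 0 = - 1 / 2"
| "cs (Suc k) = (\<Sum>i\<le>k. cs i * cs (k - i)) / 2"

definition gs :: "real fps" where "gs = Abs_fps cs"
definition gc :: "real fps" where "gc = Abs_fps (\<lambda>i. cstd (Suc i))"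

lemma fps_nth_2: "fps_nth (2 * f) n = 2 * fps_nth f (n::nat)" for f :: "real fps"
  by (simp add: fps_numeral_fps_const)

lemma gs_eq: "1 + 2 * gs = fps_X * gs ^ 2"
proof (rule fps_ext)
  fix n
  show "fps_nth (1 + 2 * gs) n = fps_nth (fps_X * gs ^ 2) n"
  proof (cases n)
    case 0 then show ?thesis by (simp add: fps_nth_2 gs_def)
  next
    case (Suc k)
    have "fps_nth (fps_X * gs ^ 2) n = fps_nth (gs * gs) k"
      using Suc by (simp only: fps_X_mult_nth power2_eq_square) simp
    also have "\<dots> = (\<Sum>i=0..k. cs i * cs (k - i))"
      by (simp add: fps_mult_nth gs_def)
    also have "\<dots> = 2 * cs (Suc k)" by (simp add: atLeast0AtMost)
    finally show ?thesis using Suc by (simp add: fps_nth_2 gs_def)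
  qed
qed

lemma cstd_1: "cstd (Suc 0) = - 1 / 2"
  by (subst cstd.simps) simp

lemma cstd_ge2: "k \<ge> 2 \<Longrightarrow> cstd k = - (1 / 2 ^ k) * (\<Sum>j=1..k div 2. \<Sum>i=1..j.
                      real ((k + 1) choose (2 * j + 1)) * real (j choose i) * cstd (k - i))"
  by (subst cstd.simps) simp

lemma aa_diag_zero: "k \<ge> 1 \<Longrightarrow> fps_nth (aa (Suc k)) k = 0"
  unfolding aa_nth
proof (intro sum.neutral ballI)
  fix j assume "k \<ge> 1" "j \<in> {..Suc k}"
  show "real (Suc k choose (2 * j + 1)) * real (j choose k) = 0"
  proof (cases "j < k")
    case True then show ?thesis by simp
  next
    case False
    then have "Suc k < 2 * j + 1" using \<open>k \<ge> 1\<close> by simp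
    then have "Suc k choose (2 * j + 1) = 0" by (rule binomial_eq_0)
    then show ?thesis by (simp del: binomial_Suc_Suc)
  qed
qed

lemma S_identity:
  assumes K: "K = Suc k" "k \<ge> 1"
  shows "(\<Sum>t=1..k. fps_nth (aa (Suc K)) t * cstd (K - t)) =
    (\<Sum>j=1..K div 2. \<Sum>i=1..j. real ((K + 1) choose (2 * j + 1)) * real (j choose i) * cstd (K - i))"
proof -
  let ?T = "\<lambda>j t. real ((K + 1) choose (2 * j + 1)) * real (j choose t) * cstd (K - t)"
  have "(\<Sum>t=1..k. fps_nth (aa (Suc K)) t * cstd (K - t)) = (\<Sum>t=1..k. \<Sum>j\<le>Suc K. ?T j t)"
    unfolding aa_nth by (simp only: sum_distrib_right Suc_eq_plus1)
  also have "\<dots> = (\<Sum>j\<le>Suc K. \<Sum>t=1..k. ?T j t)" by (rule sum.swap)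
  also have "\<dots> = (\<Sum>j=1..K div 2. \<Sum>t=1..k. ?T j t)"
  proof (rule sum.mono_neutral_right)
    show "{1..K div 2} \<subseteq> {..Suc K}" by auto
    show "\<forall>j\<in>{..Suc K} - {1..K div 2}. (\<Sum>t=1..k. ?T j t) = 0"
    proof
      fix j assume j: "j \<in> {..Suc K} - {1..K div 2}"
      show "(\<Sum>t=1..k. ?T j t) = 0"
      proof (cases "j = 0")
        case True then show ?thesis by (intro sum.neutral) auto
      next
        case False
        then have "K div 2 < j" using j by auto
        then have "K + 1 < 2 * j + 1" by linarith
        then have z: "(K + 1) choose (2 * j + 1) = 0" by (rule binomial_eq_0)
        show ?thesis by (simp only: z) simp
      qed
    qed
  qed simp
  also have "\<dots> = (\<Sum>j=1..K div 2. \<Sum>i=1..j. ?T j i)"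
  proof (rule sum.cong[OF refl])
    fix j assume j: "j \<in> {1..K div 2}"
    have jk: "j \<le> k" using j K by auto
    show "(\<Sum>t=1..k. ?T j t) = (\<Sum>i=1..j. ?T j i)"
    proof (rule sum.mono_neutral_right)
      show "{1..j} \<subseteq> {1..k}" using jk by auto
      show "\<forall>t\<in>{1..k} - {1..j}. ?T j t = 0" by (auto simp: binomial_eq_0)
    qed simp
  qed
  finally show ?thesis by simp
qed

lemma key_gc: "fps_nth (aa (Suc k) + aa (Suc (Suc k)) * gc) k = 0"
proof (cases k)
  case 0
  then show ?thesis by (simp add: fps_mult_nth gc_def cstd_1)
next
  case (Suc k')
  define K where "K = Suc k"
  have k1: "k \<ge> 1" using Suc by simp
  have "fps_nth (aa (Suc (Suc k)) * gc) k = (\<Sum>t=0..k. fps_nth (aa (Suc K)) t * cstd (K - t))"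
    unfolding fps_mult_nth K_def gc_def by (intro sum.cong refl) (simp add: Suc_diff_le)
  also have "\<dots> = fps_nth (aa (Suc K)) 0 * cstd K + (\<Sum>t=1..k. fps_nth (aa (Suc K)) t * cstd (K - t))"
    by (simp add: sum.atLeast_Suc_atMost)
  also have "\<dots> = 2 ^ K * cstd K + (\<Sum>j=1..K div 2. \<Sum>i=1..j. real ((K + 1) choose (2 * j + 1)) * real (j choose i) * cstd (K - i))"
    using S_identity[OF K_def k1] by (simp add: aa_nth0)
  also have "\<dots> = 0"
    using cstd_ge2[of K] k1 unfolding K_def by simp
  finally show ?thesis using aa_diag_zero[OF k1] by simp
qed

lemma key_gs: "fps_nth (aa (Suc k) + aa (Suc (Suc k)) * gs) k = 0"
  using aa_eig[OF gs_eq, of "Suc k"] eig_coeff_zero[of k "Suc k" gs] by simp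

lemma gc_gs: "gc = gs"
proof (rule fps_ext)
  fix i
  show "fps_nth gc i = fps_nth gs i"
  proof (induction i rule: less_induct)
    case (less i)
    have "fps_nth (aa (Suc (Suc i)) * (gc - gs)) i = 0"
      using key_gc[of i] key_gs[of i] by (simp add: algebra_simps)
    then have "(\<Sum>t=0..i. fps_nth (aa (Suc (Suc i))) t * fps_nth (gc - gs) (i - t)) = 0"
      by (simp add: fps_mult_nth)
    moreover have "(\<Sum>t=0..i. fps_nth (aa (Suc (Suc i))) t * fps_nth (gc - gs) (i - t)) =
        fps_nth (aa (Suc (Suc i))) 0 * fps_nth (gc - gs) i"
    proof -
      have "(\<Sum>t=Suc 0..i. fps_nth (aa (Suc (Suc i))) t * fps_nth (gc - gs) (i - t)) = 0"
        using less.IH by (intro sum.neutral) auto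
      then show ?thesis by (simp add: sum.atLeast_Suc_atMost)
    qed
    ultimately have "2 ^ Suc i * fps_nth (gc - gs) i = 0" by (simp add: aa_nth0)
    then show ?case by simp
  qed
qed

lemma gc_eq: "1 + 2 * gc = fps_X * gc ^ 2"
  using gs_eq gc_gs by simp


lemma pd_lin:
  assumes I: "finite I" and f: "\<And>i. i \<in> I \<Longrightarrow> nice m (f i)" and j: "j \<in> {2..m}"
  shows "pd j (\<lambda>x C. \<Sum>i\<in>I. a i * f i x C) = (\<lambda>x C. \<Sum>i\<in>I. a i * pd j (f i) x C)"
proof -
  have "pd j (\<lambda>x C. \<Sum>i\<in>I. (\<lambda>x C. a i * f i x C) x C) = (\<lambda>x C. \<Sum>i\<in>I. pd j (\<lambda>x C. a i * f i x C) x C)"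
    by (rule pd_sum[OF I _ j]) (rule nice_scale[OF f])
  also have "\<dots> = (\<lambda>x C. \<Sum>i\<in>I. a i * pd j (f i) x C)"
    by (intro ext sum.cong refl) (simp add: pd_scale[OF f j])
  finally show ?thesis by simp
qed

lemma nice_lin: "finite I \<Longrightarrow> (\<And>i. i \<in> I \<Longrightarrow> nice m (f i)) \<Longrightarrow> nice m (\<lambda>x C. \<Sum>i\<in>I. a i * f i x C)"
  by (rule nice_sum) (auto intro: nice_scale)

lemma ldy_lin:
  assumes I: "finite I" and f: "\<And>i. i \<in> I \<Longrightarrow> nice m (f i)"
  shows "ldy m (\<lambda>x C. \<Sum>i\<in>I. a i * f i x C) = (\<lambda>x C. \<Sum>i\<in>I. a i * ldy m (f i) x C)"
proof (intro ext)
  fix x D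
  have "ldy m (\<lambda>x C. \<Sum>i\<in>I. a i * f i x C) x D = (\<Sum>j\<in>{2..m}. \<Sum>i\<in>I. a i * clmul m (gen j) (pd j (f i) x) D)"
    unfolding ldy_eq by (intro sum.cong refl) (simp add: pd_lin[OF I f] clmul_sum_r clmul_scale_r)
  also have "\<dots> = (\<Sum>i\<in>I. a i * ldy m (f i) x D)"
    by (subst sum.swap) (simp add: ldy_eq sum_distrib_left)
  finally show "ldy m (\<lambda>x C. \<Sum>i\<in>I. a i * f i x C) x D = (\<Sum>i\<in>I. a i * ldy m (f i) x D)" .
qed

lemma rdy_lin:
  assumes I: "finite I" and f: "\<And>i. i \<in> I \<Longrightarrow> nice m (f i)"
  shows "rdy m (\<lambda>x C. \<Sum>i\<in>I. a i * f i x C) = (\<lambda>x C. \<Sum>i\<in>I. a i * rdy m (f i) x C)"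
proof (intro ext)
  fix x D
  have "rdy m (\<lambda>x C. \<Sum>i\<in>I. a i * f i x C) x D = (\<Sum>j\<in>{2..m}. \<Sum>i\<in>I. a i * clmul m (pd j (f i) x) (gen j) D)"
    unfolding rdy_eq by (intro sum.cong refl) (simp add: pd_lin[OF I f] clmul_sum_l clmul_scale_l)
  also have "\<dots> = (\<Sum>i\<in>I. a i * rdy m (f i) x D)"
    by (subst sum.swap) (simp add: rdy_eq sum_distrib_left)
  finally show "rdy m (\<lambda>x C. \<Sum>i\<in>I. a i * f i x C) x D = (\<Sum>i\<in>I. a i * rdy m (f i) x D)" .
qed

lemma Eop_lin: "Eop m (\<lambda>x C. \<Sum>i\<in>I. a i * f i x C) = (\<lambda>x C. \<Sum>i\<in>I. a i * Eop m (f i) x C)"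
  by (intro ext) (simp add: Eop_def clmul_sumf_r clmul_sum_l clmul_scalef_r clmul_scale_l)

lemma Vop_lin:
  assumes I: "finite I" and f: "\<And>i. i \<in> I \<Longrightarrow> nice m (f i)"
  shows "Vop m (\<lambda>x C. \<Sum>i\<in>I. a i * f i x C) = (\<lambda>x C. \<Sum>i\<in>I. a i * Vop m (f i) x C)"
  unfolding Vop_def
  by (intro ext) (simp add: fadd_def fsc_def rdy_lin[OF I f] Eop_lin distrib_left right_diff_distrib
      sum.distrib sum_negf sum_subtractf)

lemma Vop_pow_lin:
  assumes I: "finite I" and f: "\<And>i. i \<in> I \<Longrightarrow> nice m (f i)"
  shows "(Vop m ^^ N) (\<lambda>x C. \<Sum>i\<in>I. a i * f i x C) = (\<lambda>x C. \<Sum>i\<in>I. a i * (Vop m ^^ N) (f i) x C)"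
proof (induction N)
  case 0 then show ?case by simp
next
  case (Suc N)
  have "\<And>i. i \<in> I \<Longrightarrow> nice m ((Vop m ^^ N) (f i))" by (rule nice_pow[OF nice_Vop f])
  then show ?case using Suc by (simp add: Vop_lin[OF I])
qed

lemma rdirac_pow:
  assumes m: "m \<ge> 2" and H: "nice m H" and K: "nice m K"
  shows "(rdirac m ^^ N) (EP m H K) = EP m ((Utilde m ^^ N) H) ((Vop m ^^ N) K)"
proof (induction N)
  case 0 then show ?case by simp
next
  case (Suc N)
  have "nice m ((Utilde m ^^ N) H)" by (rule nice_pow[OF nice_Utilde H])
  moreover have "nice m ((Vop m ^^ N) K)" by (rule nice_pow[OF nice_Vop K])
  ultimately show ?case using Suc by (simp add: rdirac_EP[OF m])
qed

lemma EP_zero: "EP m (\<lambda>x C. 0) (\<lambda>x C. 0) = (\<lambda>x. clzero)"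
  by (simp add: EP_def ep_zero)

definition act :: "nat \<Rightarrow> nat \<Rightarrow> ((nat \<Rightarrow> real) \<Rightarrow> clif) \<Rightarrow> real fps \<Rightarrow> (nat \<Rightarrow> real) \<Rightarrow> clif" where
  "act m n A p = (\<lambda>x C. \<Sum>i\<in>{..<n}. fps_nth p i * (ldy m ^^ (2 * i)) A x C)"
definition actD :: "nat \<Rightarrow> nat \<Rightarrow> ((nat \<Rightarrow> real) \<Rightarrow> clif) \<Rightarrow> real fps \<Rightarrow> (nat \<Rightarrow> real) \<Rightarrow> clif" where
  "actD m n A p = (\<lambda>x C. \<Sum>i\<in>{..<n}. fps_nth p i * (ldy m ^^ (2 * i + 1)) A x C)"

lemma nice_act: assumes A: "nice m A" shows "nice m (act m n A p)"
  unfolding act_def by (rule nice_lin) (simp, rule nice_pow[OF nice_ldy A])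

lemma nice_actD: assumes A: "nice m A" shows "nice m (actD m n A p)"
  unfolding actD_def by (rule nice_lin) (simp, rule nice_pow[OF nice_ldy A])

lemma ldy_pow_odd: "(ldy m ^^ (2 * i + 1)) A = ldy m ((ldy m ^^ (2 * i)) A)"
  by simp

lemma ldy_pow_even: "(ldy m ^^ (2 * Suc i)) A = ldy m ((ldy m ^^ (2 * i + 1)) A)"
  by simp

lemma ldy_act: assumes A: "nice m A" shows "ldy m (act m n A p) = actD m n A p"
proof -
  have "ldy m (act m n A p) = (\<lambda>x C. \<Sum>i\<in>{..<n}. fps_nth p i * ldy m ((ldy m ^^ (2 * i)) A) x C)"
    unfolding act_def by (rule ldy_lin) (simp_all add: nice_pow[OF nice_ldy A])
  then show ?thesis unfolding actD_def ldy_pow_odd .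
qed

lemma ldy_actD:
  assumes A: "nice m A" and z: "(ldy m ^^ (2 * n)) A = (\<lambda>x C. 0)"
  shows "ldy m (actD m n A q) = act m n A (fps_X * q)"
proof -
  have "ldy m (actD m n A q) = (\<lambda>x C. \<Sum>i\<in>{..<n}. fps_nth q i * (ldy m ^^ (2 * Suc i)) A x C)"
  proof -
    have "ldy m (actD m n A q) = (\<lambda>x C. \<Sum>i\<in>{..<n}. fps_nth q i * ldy m ((ldy m ^^ (2 * i + 1)) A) x C)"
      unfolding actD_def by (rule ldy_lin) (simp_all add: nice_pow[OF nice_ldy A] del: funpow.simps)
    then show ?thesis unfolding ldy_pow_even .
  qed
  also have "\<dots> = act m n A (fps_X * q)"
  proof (intro ext)
    fix x C
    let ?f = "\<lambda>i. fps_nth (fps_X * q) i * (ldy m ^^ (2 * i)) A x C"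
    have "(\<Sum>i\<in>{..<n}. fps_nth q i * (ldy m ^^ (2 * Suc i)) A x C) = (\<Sum>i\<in>{..<n}. ?f (Suc i))"
      by (intro sum.cong refl) simp
    also have "\<dots> = ?f 0 + (\<Sum>i\<in>{..<n}. ?f (Suc i))" by simp
    also have "\<dots> = (\<Sum>i\<in>{..<Suc n}. ?f i)" by (rule sum.lessThan_Suc_shift[symmetric])
    also have "\<dots> = (\<Sum>i\<in>{..<n}. ?f i) + ?f n" by (rule sum.lessThan_Suc)
    also have "\<dots> = (\<Sum>i\<in>{..<n}. ?f i)" using z by simp
    finally show "(\<Sum>i\<in>{..<n}. fps_nth q i * (ldy m ^^ (2 * Suc i)) A x C) = act m n A (fps_X * q) x C"
      by (simp add: act_def)
  qed
  finally show ?thesis .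
qed

lemma ldirac_act:
  assumes m: "m \<ge> 2" and A: "nice m A" and z: "(ldy m ^^ (2 * n)) A = (\<lambda>x C. 0)"
  shows "ldirac m (EP m (act m n A p) (actD m n A q)) = EP m (act m n A (fps_X * q)) (actD m n A (p + 2 * q))"
proof -
  have "fadd (actD m n A p) (fsc 2 (actD m n A q)) = actD m n A (p + 2 * q)"
  proof (intro ext)
    fix x C
    have "fps_nth (p + 2 * q) i = fps_nth p i + 2 * fps_nth q i" for i
      by (simp only: fps_add_nth fps_nth_2)
    then show "fadd (actD m n A p) (fsc 2 (actD m n A q)) x C = actD m n A (p + 2 * q) x C"
      by (simp only: fadd_def fsc_def actD_def sum.distrib sum_distrib_left distrib_right mult.assoc)
  qed
  then show ?thesis
    using ldirac_EP[OF m nice_act[OF A] nice_actD[OF A]] ldy_act[OF A] ldy_actD[OF A z] by simp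
qed

lemma ldirac_pow:
  assumes m: "m \<ge> 2" and A: "nice m A" and z: "(ldy m ^^ (2 * n)) A = (\<lambda>x C. 0)"
  shows "(ldirac m ^^ N) (EP m (act m n A 1) (actD m n A gc)) =
     EP m (act m n A ((fps_X * gc) ^ N)) (actD m n A ((fps_X * gc) ^ N * gc))"
proof (induction N)
  case 0 then show ?case by simp
next
  case (Suc N)
  have e1: "fps_X * ((fps_X * gc) ^ N * gc) = (fps_X * gc) ^ Suc N" by (simp add: algebra_simps)
  have e2: "(fps_X * gc) ^ N + 2 * ((fps_X * gc) ^ N * gc) = (fps_X * gc) ^ Suc N * gc"
  proof -
    have "(fps_X * gc) ^ N + 2 * ((fps_X * gc) ^ N * gc) = (fps_X * gc) ^ N * (1 + 2 * gc)"
      by (simp add: algebra_simps)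
    also have "\<dots> = (fps_X * gc) ^ Suc N * gc" unfolding gc_eq by (simp add: power2_eq_square algebra_simps)
    finally show ?thesis .
  qed
  show ?case using Suc by (simp add: ldirac_act[OF m A z] e1 e2)
qed

lemma act_zero: "(\<And>i. i < n \<Longrightarrow> fps_nth p i = 0) \<Longrightarrow> act m n A p = (\<lambda>x C. 0)"
  unfolding act_def by (intro ext) simp

lemma actD_zero: "(\<And>i. i < n \<Longrightarrow> fps_nth p i = 0) \<Longrightarrow> actD m n A p = (\<lambda>x C. 0)"
  unfolding actD_def by (intro ext) simp


lemma sum_1n_shift: "(\<Sum>k=1..n. f k) = (\<Sum>i\<in>{..<n}. f (Suc i))"
proof -
  have "{1..n} = Suc ` {..<n}" by (auto simp: image_iff) (metis Suc_pred less_Suc_eq_le not_less_eq_eq lessThan_iff le_zero_eq not_less0 One_nat_def Suc_le_eq)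
  then show ?thesis by (simp add: sum.reindex)
qed

theorem proposition1:
  fixes m n :: nat and A :: "(nat \<Rightarrow> real) \<Rightarrow> clif" and c :: "nat \<Rightarrow> real"
  assumes "m \<ge> 2" and "n \<ge> 1"
    and "clif_valued m A" and "depends_on_y m A" and "smooth_y m A"
    and "(Utilde m ^^ n) A = (\<lambda>x. clzero)"
  defines "B \<equiv> (\<lambda>x C. \<Sum>k=1..n. c k * (ldy m ^^ (2 * k - 1)) A x C)"
  defines "F \<equiv> (\<lambda>x. cladd (clmul m (cexpz x) (A x)) (clmul m (cexpzbar x) (B x)))"
  shows "(rdirac m ^^ n) F = (\<lambda>x. clzero) \<and>
         ((\<forall>k\<in>{1..n}. c k = cstd k) \<longrightarrow> (ldirac m ^^ n) F = (\<lambda>x. clzero))"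
proof -
  have m: "m \<ge> 2" and n: "n \<ge> 1" using assms(1,2) .
  have nA: "nice m A" using assms(3,4,5) by (simp add: nice_def smooth_ssm)
  have U0: "(Utilde m ^^ n) A = (\<lambda>x C. 0)" using assms(6) by (simp add: clzero_def)
  have FEP: "F = EP m A B" by (simp add: F_def EP_def ep_def)
  have nk: "\<And>k. nice m ((ldy m ^^ k) A)" by (rule nice_pow[OF nice_ldy nA])
  have nB: "nice m B" unfolding B_def by (rule nice_lin) (simp_all add: nk)
  have part1: "(rdirac m ^^ n) F = (\<lambda>x. clzero)"
  proof -
    have "(Vop m ^^ n) B = (\<lambda>x C. \<Sum>k=1..n. c k * (Vop m ^^ n) ((ldy m ^^ (2 * k - 1)) A) x C)"
      unfolding B_def by (rule Vop_pow_lin) (simp_all add: nk)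
    also have "\<dots> = (\<lambda>x C. 0)"
    proof (intro ext sum.neutral ballI)
      fix x C k assume k: "k \<in> {1..n}"
      have "odd (2 * k - 1)" using k by auto
      then have "(Vop m ^^ n) ((ldy m ^^ (2 * k - 1)) A) = (ldy m ^^ (2 * k - 1)) ((Utilde m ^^ n) A)"
        by (rule Vop_pow_ldy_odd[OF m nA])
      then show "c k * (Vop m ^^ n) ((ldy m ^^ (2 * k - 1)) A) x C = 0"
        by (simp add: U0 ldy_pow_zero)
    qed
    finally have V0: "(Vop m ^^ n) B = (\<lambda>x C. 0)" .
    show ?thesis unfolding FEP rdirac_pow[OF m nA nB] U0 V0 by (rule EP_zero)
  qed
  have part2: "(ldirac m ^^ n) F = (\<lambda>x. clzero)" if hc: "\<forall>k\<in>{1..n}. c k = cstd k"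
  proof -
    have "(rdy m ^^ (2 * n)) A = (\<lambda>x C. 0)" by (rule Utilde_pow_zero[OF m nA U0])
    then have z: "(ldy m ^^ (2 * n)) A = (\<lambda>x C. 0)" using rdy_ldy_pow[OF m nA] by simp
    have A1: "act m n A 1 = A"
    proof (intro ext)
      fix x C
      have "act m n A 1 x C = (\<Sum>i\<in>{..<n}. if i = 0 then A x C else 0)"
        unfolding act_def by (intro sum.cong refl) simp
      also have "\<dots> = A x C" using n by simp
      finally show "act m n A 1 x C = A x C" .
    qed
    have B1: "actD m n A gc = B"
    proof (intro ext)
      fix x C
      have "B x C = (\<Sum>i\<in>{..<n}. c (Suc i) * (ldy m ^^ (2 * Suc i - 1)) A x C)"
        unfolding B_def by (rule sum_1n_shift)
      also have "\<dots> = actD m n A gc x C"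
        unfolding actD_def gc_def using hc by (intro sum.cong refl) auto
      finally show "actD m n A gc x C = B x C" by simp
    qed
    have "(ldirac m ^^ n) F = EP m (act m n A ((fps_X * gc) ^ n)) (actD m n A ((fps_X * gc) ^ n * gc))"
      unfolding FEP using ldirac_pow[OF m nA z, of n] A1 B1 by simp
    also have "\<dots> = EP m (\<lambda>x C. 0) (\<lambda>x C. 0)"
    proof -
      have "act m n A ((fps_X * gc) ^ n) = (\<lambda>x C. 0)"
        by (rule act_zero) (simp add: power_mult_distrib fps_X_power_mult_nth)
      moreover have "actD m n A ((fps_X * gc) ^ n * gc) = (\<lambda>x C. 0)"
        by (rule actD_zero) (rule eig_coeff_zero)
      ultimately show ?thesis by simp
    qed
    also have "\<dots> = (\<lambda>x. clzero)" by (rule EP_zero)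
    finally show ?thesis .
  qed
  show ?thesis using part1 part2 by blast
qed


end
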